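(* Let $\sigma\in\Sigma$. The following are equivalent: (i) $A^\sigma_W=A_W$; (ii) for every proper face $\tau$ of $\sigma$ there exists $u\in\tau^\perp_{W^*}$ with $\rho_N(u)=1$ for all $\rho\in\sigma_1\setminus\tau_1$; (iii) for every $\tau\in\Sigma$ there exists $u\in(\sigma\cap\tau)^\perp_{W^*}$ with $\rho_N(u)=1$ for all $\rho\in\sigma_1\setminus\tau_1$; (iv) $\sigma$ is $W$-regular.
   Context: Let $R\subseteq\mathbb{R}$ be a principal ideal subring. Let $V$ be a real vector space of finite dimension $n$, let $N\subseteq V$ be a lattice (a free $\mathbb{Z}$-submodule of rank $n$ spanning $V$), and let $W\subseteq V$ be the $R$-submodule generated by $N$. Put $W^*=\{u\in V^*\mid u(W)\subseteq R\}$. An $N$-fan is a finite set $\Sigma$ of sharp (containing no line) polyhedral cones in $V$, each the conic hull of a finite subset of $N$, such that every face of a cone of $\Sigma$ lies in $\Sigma$ and the intersection of two cones of $\Sigma$ is a face of each. For a cone $\sigma$ put $\sigma^\perp=\{u\in V^*\mid u(\sigma)=0\}$, $\sigma^\perp_{W^*}=\sigma^\perp\cap W^*$. Let $\Sigma_1$ be the set of rays of $\Sigma$ and $\sigma_1$ the set of rays that are faces of $\sigma$. For $\rho\in\Sigma_1$ let $\rho_N$ be the primitive generator of $N\cap\rho$, viewed as the linear form $W^*\to R$, $m\mapsto m(\rho_N)$. Let $c_W\colon W^*\to R^{\Sigma_1}$, $m\mapsto(\rho_N(m))_\rho$, let $a_W\colon R^{\Sigma_1}\to A_W$ be its cokernel,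 $\alpha_\rho=a_W(\delta_\rho)$ for the standard basis $(\delta_\rho)$, and for $\sigma\in\Sigma$ let $A^\sigma_W$ be the submodule generated by $\{\alpha_\rho\mid\rho\in\Sigma_1\setminus\sigma_1\}$. A cone $\sigma$ is $W$-regular if it is the conic hull of a subset of $W$ contained in an $R$-basis of $W$. *)

theory Defs
  imports "HOL-Analysis.Analysis"
begin

definition real_subring :: "real set \<Rightarrow> bool" where
  "real_subring R \<longleftrightarrow> 0 \<in> R \<and> 1 \<in> R \<and>
     (\<forall>x\<in>R. \<forall>y\<in>R. x + y \<in> R \<and> x - y \<in> R \<and> x * y \<in> R)"

definition ring_ideal :: "real set \<Rightarrow> real set \<Rightarrow> bool" where
  "ring_ideal R I \<longleftrightarrow> I \<subseteq> R \<and> 0 \<in> I \<and>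
     (\<forall>x\<in>I. \<forall>y\<in>I. x + y \<in> I \<and> - x \<in> I) \<and> (\<forall>r\<in>R. \<forall>x\<in>I. r * x \<in> I)"

definition principal_ideal_subring :: "real set \<Rightarrow> bool" where
  "principal_ideal_subring R \<longleftrightarrow> real_subring R \<and>
     (\<forall>I. ring_ideal R I \<longrightarrow> (\<exists>a\<in>R. I = {r * a | r. r \<in> R}))"

definition Rspan :: "real set \<Rightarrow> 'v::real_vector set \<Rightarrow> 'v set" where
  "Rspan R S = {x. \<exists>F c. finite F \<and> F \<subseteq> S \<and> (\<forall>v\<in>F. c v \<in> R) \<and> x = (\<Sum>v\<in>F. c v *\<^sub>R v)}"

definition R_independent :: "real set \<Rightarrow> 'v::real_vector set \<Rightarrow> bool" where
  "R_independent R B \<longleftrightarrow> (\<forall>F c. finite F \<and> F \<subseteq> B \<and> (\<forall>v\<in>F. c v \<in> R) \<and>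
      (\<Sum>v\<in>F. c v *\<^sub>R v) = 0 \<longrightarrow> (\<forall>v\<in>F. c v = 0))"

definition R_basis :: "real set \<Rightarrow> 'v::real_vector set \<Rightarrow> 'v set \<Rightarrow> bool" where
  "R_basis R W B \<longleftrightarrow> B \<subseteq> W \<and> R_independent R B \<and> Rspan R B = W"

definition is_lattice :: "'v::euclidean_space set \<Rightarrow> bool" where
  "is_lattice N \<longleftrightarrow> (\<exists>B. finite B \<and> card B = DIM('v) \<and> span B = UNIV \<and>
      N = {x. \<exists>k::'v \<Rightarrow> int. x = (\<Sum>b\<in>B. of_int (k b) *\<^sub>R b)})"

definition dual_W :: "real set \<Rightarrow> 'v::real_vector set \<Rightarrow> ('v \<Rightarrow> real) set" where
  "dual_W R W = {u. linear u \<and> (\<forall>w\<in>W. u w \<in> R)}"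

definition conic_hull :: "'v::real_vector set \<Rightarrow> 'v set" where
  "conic_hull S = {x. \<exists>F c. finite F \<and> F \<subseteq> S \<and> (\<forall>v\<in>F. c v \<ge> 0) \<and> x = (\<Sum>v\<in>F. c v *\<^sub>R v)}"

definition sharp :: "'v::real_vector set \<Rightarrow> bool" where
  "sharp \<sigma> \<longleftrightarrow> (\<forall>x. x \<in> \<sigma> \<and> - x \<in> \<sigma> \<longrightarrow> x = 0)"

definition N_cone :: "'v::real_vector set \<Rightarrow> 'v set \<Rightarrow> bool" where
  "N_cone N \<sigma> \<longleftrightarrow> sharp \<sigma> \<and> (\<exists>S. finite S \<and> S \<subseteq> N \<and> \<sigma> = conic_hull S)"

definition cone_face :: "'v::real_vector set \<Rightarrow> 'v set \<Rightarrow> bool" where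
  "cone_face \<tau> \<sigma> \<longleftrightarrow> (\<exists>u::'v \<Rightarrow> real. linear u \<and> (\<forall>x\<in>\<sigma>. u x \<ge> 0) \<and> \<tau> = {x\<in>\<sigma>. u x = 0})"

definition N_fan :: "'v::real_vector set \<Rightarrow> 'v set set \<Rightarrow> bool" where
  "N_fan N \<Sigma> \<longleftrightarrow> finite \<Sigma> \<and> (\<forall>\<sigma>\<in>\<Sigma>. N_cone N \<sigma>) \<and>
     (\<forall>\<sigma>\<in>\<Sigma>. \<forall>\<tau>. cone_face \<tau> \<sigma> \<longrightarrow> \<tau> \<in> \<Sigma>) \<and>
     (\<forall>\<sigma>\<in>\<Sigma>. \<forall>\<tau>\<in>\<Sigma>. cone_face (\<sigma> \<inter> \<tau>) \<sigma> \<and> cone_face (\<sigma> \<inter> \<tau>) \<tau>)"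

definition is_ray :: "'v::real_vector set \<Rightarrow> bool" where
  "is_ray \<rho> \<longleftrightarrow> (\<exists>v. v \<noteq> 0 \<and> \<rho> = {c *\<^sub>R v | c. c \<ge> 0})"

definition fan_rays :: "'v::real_vector set set \<Rightarrow> 'v set set" where
  "fan_rays \<Sigma> = {\<rho>\<in>\<Sigma>. is_ray \<rho>}"

definition cone_rays :: "'v::real_vector set \<Rightarrow> 'v set set" where
  "cone_rays \<sigma> = {\<rho>. is_ray \<rho> \<and> cone_face \<rho> \<sigma>}"

definition prim_gen :: "'v::real_vector set \<Rightarrow> 'v set \<Rightarrow> 'v" where
  "prim_gen N \<rho> = (THE v. v \<in> N \<inter> \<rho> \<and> v \<noteq> 0 \<and> (\<forall>w\<in>N \<inter> \<rho>. \<exists>k::nat. w = of_nat k *\<^sub>R v))"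

definition perp :: "'v::real_vector set \<Rightarrow> ('v \<Rightarrow> real) set" where
  "perp \<sigma> = {u. linear u \<and> (\<forall>x\<in>\<sigma>. u x = 0)}"

text \<open>R^{Sigma_1}, realised as functions on cones, R-valued, zero off Sigma_1.\<close>
definition R_Sigma1 :: "real set \<Rightarrow> 'v::real_vector set set \<Rightarrow> ('v set \<Rightarrow> real) set" where
  "R_Sigma1 R \<Sigma> = {x. (\<forall>\<rho>. x \<rho> \<in> R) \<and> (\<forall>\<rho>. \<rho> \<notin> fan_rays \<Sigma> \<longrightarrow> x \<rho> = 0)}"

definition c_W :: "'v::real_vector set \<Rightarrow> 'v set set \<Rightarrow> ('v \<Rightarrow> real) \<Rightarrow> ('v set \<Rightarrow> real)" where
  "c_W N \<Sigma> m = (\<lambda>\<rho>. if \<rho> \<in> fan_rays \<Sigma> then m (prim_gen N \<rho>) else 0)"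

text \<open>The cokernel map a_W : R^{Sigma_1} \<rightarrow> A_W, elements of A_W being cosets
  modulo the image of c_W.\<close>
definition a_W :: "real set \<Rightarrow> 'v::real_vector set \<Rightarrow> 'v set set \<Rightarrow> ('v set \<Rightarrow> real) \<Rightarrow> ('v set \<Rightarrow> real) set" where
  "a_W R N \<Sigma> x = {y \<in> R_Sigma1 R \<Sigma>. x - y \<in> c_W N \<Sigma> ` dual_W R (Rspan R N)}"

definition A_W :: "real set \<Rightarrow> 'v::real_vector set \<Rightarrow> 'v set set \<Rightarrow> ('v set \<Rightarrow> real) set set" where
  "A_W R N \<Sigma> = a_W R N \<Sigma> ` R_Sigma1 R \<Sigma>"

text \<open>A^sigma_W: submodule generated by alpha_rho, rho in Sigma_1 - sigma_1; as a_W is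
  R-linear this is the image under a_W of the R-span of the delta_rho.\<close>
definition A_W_sigma :: "real set \<Rightarrow> 'v::real_vector set \<Rightarrow> 'v set set \<Rightarrow> 'v set \<Rightarrow> ('v set \<Rightarrow> real) set set" where
  "A_W_sigma R N \<Sigma> \<sigma> = a_W R N \<Sigma> `
     {y \<in> R_Sigma1 R \<Sigma>. \<forall>\<rho>. \<rho> \<in> cone_rays \<sigma> \<longrightarrow> y \<rho> = 0}"

definition W_regular :: "real set \<Rightarrow> 'v::real_vector set \<Rightarrow> 'v set \<Rightarrow> bool" where
  "W_regular R W \<sigma> \<longleftrightarrow> (\<exists>S B. S \<subseteq> B \<and> R_basis R W B \<and> \<sigma> = conic_hull S)"

end

theory Submission
  imports Defs
begin

lemma sum_if_restrict:
  assumes "finite F" "F1 \<subseteq> F"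
  shows "(\<Sum>v\<in>F. (if v \<in> F1 then c v else 0) *\<^sub>R (v::'a::real_vector)) = (\<Sum>v\<in>F1. c v *\<^sub>R v)"
proof -
  have "(\<Sum>v\<in>F. (if v \<in> F1 then c v else 0) *\<^sub>R v) = (\<Sum>v\<in>F. if v \<in> F1 then c v *\<^sub>R v else 0)"
    by (rule sum.cong) auto
  also have "\<dots> = (\<Sum>v\<in>F \<inter> F1. c v *\<^sub>R v)" using assms(1) by (rule sum.inter_restrict[symmetric])
  also have "F \<inter> F1 = F1" using assms(2) by blast
  finally show ?thesis .
qed

lemma chI:
  assumes "finite F" "F \<subseteq> S" "\<forall>v\<in>F. c v \<ge> 0" "x = (\<Sum>v\<in>F. c v *\<^sub>R v)"
  shows "x \<in> conic_hull S"
  unfolding conic_hull_def using assms by (intro CollectI exI[of _ F] exI[of _ c]) simp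

lemma ch_0: "0 \<in> conic_hull S"
  unfolding conic_hull_def by (rule CollectI, rule exI[of _ "{}"]) auto

lemma ch_base: "v \<in> S \<Longrightarrow> v \<in> conic_hull S"
  unfolding conic_hull_def by (rule CollectI, rule exI[of _ "{v}"], rule exI[of _ "\<lambda>_. 1"]) auto

lemma ch_add:
  assumes "x \<in> conic_hull S" "y \<in> conic_hull S"
  shows "x + y \<in> conic_hull S"
proof -
  obtain F1 c1 where 1: "finite F1" "F1 \<subseteq> S" "\<forall>v\<in>F1. c1 v \<ge> 0" "x = (\<Sum>v\<in>F1. c1 v *\<^sub>R v)"
    using assms(1) unfolding conic_hull_def by blast
  obtain F2 c2 where 2: "finite F2" "F2 \<subseteq> S" "\<forall>v\<in>F2. c2 v \<ge> 0" "y = (\<Sum>v\<in>F2. c2 v *\<^sub>R v)"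
    using assms(2) unfolding conic_hull_def by blast
  define c where "c v = (if v \<in> F1 then c1 v else 0) + (if v \<in> F2 then c2 v else 0)" for v
  have "(\<Sum>v\<in>F1 \<union> F2. c v *\<^sub>R v) = (\<Sum>v\<in>F1 \<union> F2. (if v \<in> F1 then c1 v else 0) *\<^sub>R v)
        + (\<Sum>v\<in>F1 \<union> F2. (if v \<in> F2 then c2 v else 0) *\<^sub>R v)"
    unfolding c_def by (simp add: scaleR_add_left sum.distrib)
  also have "\<dots> = x + y" using 1 2 by (simp add: sum_if_restrict)
  finally have e: "x + y = (\<Sum>v\<in>F1 \<union> F2. c v *\<^sub>R v)" by simp
  have "\<forall>v\<in>F1 \<union> F2. c v \<ge> 0" using 1(3) 2(3) unfolding c_def by simp
  then show ?thesis unfolding conic_hull_def using 1(1,2) 2(1,2) e by blast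
qed

lemma ch_scale:
  assumes "x \<in> conic_hull S" "a \<ge> 0"
  shows "a *\<^sub>R x \<in> conic_hull S"
proof -
  obtain F1 c1 where 1: "finite F1" "F1 \<subseteq> S" "\<forall>v\<in>F1. c1 v \<ge> 0" "x = (\<Sum>v\<in>F1. c1 v *\<^sub>R v)"
    using assms(1) unfolding conic_hull_def by blast
  have "a *\<^sub>R x = (\<Sum>v\<in>F1. (a * c1 v) *\<^sub>R v)" using 1 by (simp add: scaleR_sum_right)
  then show ?thesis unfolding conic_hull_def using 1 assms(2)
    by (intro CollectI exI[of _ F1] exI[of _ "\<lambda>v. a * c1 v"]) auto
qed

lemma ch_minimal:
  assumes "0 \<in> C" "\<And>x y. x \<in> C \<Longrightarrow> y \<in> C \<Longrightarrow> x + y \<in> C"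
    "\<And>x a. x \<in> C \<Longrightarrow> a \<ge> 0 \<Longrightarrow> a *\<^sub>R x \<in> C" "S \<subseteq> C"
  shows "conic_hull S \<subseteq> C"
proof
  fix x assume "x \<in> conic_hull S"
  then obtain F c where 1: "finite F" "F \<subseteq> S" "\<forall>v\<in>F. c v \<ge> 0" "x = (\<Sum>v\<in>F. c v *\<^sub>R v)"
    unfolding conic_hull_def by blast
  have "F \<subseteq> S \<longrightarrow> (\<forall>v\<in>F. c v \<ge> 0) \<longrightarrow> (\<Sum>v\<in>F. c v *\<^sub>R v) \<in> C"
    using 1(1)
  proof (induction F rule: finite_induct)
    case empty then show ?case using assms(1) by simp
  next
    case (insert a F)
    show ?case
    proof (intro impI)
      assume h: "insert a F \<subseteq> S" "\<forall>v\<in>insert a F. 0 \<le> c v"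
      then have "(\<Sum>v\<in>F. c v *\<^sub>R v) \<in> C" using insert.IH by blast
      moreover have "c a *\<^sub>R a \<in> C" using h assms(3,4) by blast
      ultimately show "(\<Sum>v\<in>insert a F. c v *\<^sub>R v) \<in> C"
        using insert.hyps assms(2) by simp
    qed
  qed
  then show "x \<in> C" using 1 by auto
qed

lemma ch_mono: "S \<subseteq> T \<Longrightarrow> conic_hull S \<subseteq> conic_hull T"
  unfolding conic_hull_def by blast

lemma ch_subset_cone:
  assumes "S \<subseteq> conic_hull T" shows "conic_hull S \<subseteq> conic_hull T"
  by (rule ch_minimal) (auto simp: assms ch_0 ch_add ch_scale)

lemma ch_linear_sum:
  fixes u :: "'a::real_vector \<Rightarrow> real"
  assumes "linear u" "x = (\<Sum>v\<in>F. c v *\<^sub>R v)"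
  shows "u x = (\<Sum>v\<in>F. c v * u v)"
  using assms by (simp add: linear_sum linear_scale)

lemma ch_linear_nonneg:
  fixes u :: "'a::real_vector \<Rightarrow> real"
  assumes "linear u" "\<And>s. s \<in> S \<Longrightarrow> u s \<ge> 0" "x \<in> conic_hull S"
  shows "u x \<ge> 0"
proof -
  obtain F c where 1: "finite F" "F \<subseteq> S" "\<forall>v\<in>F. c v \<ge> 0" "x = (\<Sum>v\<in>F. c v *\<^sub>R v)"
    using assms(3) unfolding conic_hull_def by blast
  have "u x = (\<Sum>v\<in>F. c v * u v)" using ch_linear_sum[OF assms(1) 1(4)] .
  also have "\<dots> \<ge> 0"
  proof (rule sum_nonneg)
    fix v assume "v \<in> F"
    then show "c v * u v \<ge> 0" using 1(2,3) assms(2) by (simp add: subset_iff)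
  qed
  finally show ?thesis .
qed

lemma ch_linear_zero:
  fixes u :: "'a::real_vector \<Rightarrow> real"
  assumes "linear u" "\<And>s. s \<in> S \<Longrightarrow> u s = 0" "x \<in> conic_hull S"
  shows "u x = 0"
proof -
  obtain F c where 1: "finite F" "F \<subseteq> S" "\<forall>v\<in>F. c v \<ge> 0" "x = (\<Sum>v\<in>F. c v *\<^sub>R v)"
    using assms(3) unfolding conic_hull_def by blast
  have "u x = (\<Sum>v\<in>F. c v * u v)" using ch_linear_sum[OF assms(1) 1(4)] .
  also have "\<dots> = 0"
  proof (rule sum.neutral, rule ballI)
    fix v assume "v \<in> F"
    then show "c v * u v = 0" using 1(2) assms(2) by (simp add: subset_iff)
  qed
  finally show ?thesis .
qed

lemma ch_face:
  fixes u :: "'a::real_vector \<Rightarrow> real"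
  assumes "linear u" "\<And>s. s \<in> S \<Longrightarrow> u s \<ge> 0" "x \<in> conic_hull S" "u x = 0"
  shows "x \<in> conic_hull {s\<in>S. u s = 0}"
proof -
  obtain F c where 1: "finite F" "F \<subseteq> S" "\<forall>v\<in>F. c v \<ge> 0" "x = (\<Sum>v\<in>F. c v *\<^sub>R v)"
    using assms(3) unfolding conic_hull_def by blast
  have s0: "(\<Sum>v\<in>F. c v * u v) = 0" using ch_linear_sum[OF assms(1) 1(4)] assms(4) by argo
  have nn: "\<forall>v\<in>F. c v * u v \<ge> 0" using 1(2,3) assms(2) by (simp add: subset_iff)
  have z: "\<forall>v\<in>F. c v * u v = 0"
    using sum_nonneg_eq_0_iff[OF 1(1), of "\<lambda>v. c v * u v"] nn s0 by blast
  define F' where "F' = {v\<in>F. c v \<noteq> 0}"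
  have f4: "x = (\<Sum>v\<in>F'. c v *\<^sub>R v)" unfolding 1(4) F'_def
    by (rule sum.mono_neutral_right) (use 1(1) in auto)
  have f2: "F' \<subseteq> {s\<in>S. u s = 0}"
  proof
    fix v assume "v \<in> F'"
    then have "v \<in> F" "c v \<noteq> 0" unfolding F'_def by auto
    then show "v \<in> {s\<in>S. u s = 0}" using z 1(2) by auto
  qed
  have f1: "finite F'" and f3: "\<forall>v\<in>F'. c v \<ge> 0" using 1(1,3) unfolding F'_def by auto
  show ?thesis by (rule chI[OF f1 f2 f3 f4])
qed

lemma ch_sing: "conic_hull {v} = {c *\<^sub>R v | c. c \<ge> 0}"
proof
  let ?R = "{c *\<^sub>R v | c. c \<ge> 0}"
  show "conic_hull {v} \<subseteq> ?R"
  proof (rule ch_minimal)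
    have "(0::'a) = 0 *\<^sub>R v \<and> (0::real) \<ge> 0" by simp
    then show "0 \<in> ?R" by blast
    show "x + y \<in> ?R" if hx: "x \<in> ?R" and hy: "y \<in> ?R" for x y
    proof -
      obtain a where a: "x = a *\<^sub>R v" "a \<ge> 0" using hx by blast
      obtain b where b: "y = b *\<^sub>R v" "b \<ge> 0" using hy by blast
      have "x + y = (a + b) *\<^sub>R v \<and> a + b \<ge> 0" using a b by (simp add: scaleR_add_left)
      then show ?thesis by blast
    qed
    show "r *\<^sub>R x \<in> ?R" if hx: "x \<in> ?R" and ha: "r \<ge> 0" for x r
    proof -
      obtain b where b: "x = b *\<^sub>R v" "b \<ge> 0" using hx by blast
      have "r *\<^sub>R x = (r * b) *\<^sub>R v \<and> r * b \<ge> 0" using b ha by simp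
      then show ?thesis by blast
    qed
    have "v = 1 *\<^sub>R v \<and> (1::real) \<ge> 0" by simp
    then show "{v} \<subseteq> ?R" by blast
  qed
  show "?R \<subseteq> conic_hull {v}"
  proof
    fix x assume "x \<in> ?R"
    then obtain c where "x = c *\<^sub>R v" "c \<ge> 0" by blast
    then show "x \<in> conic_hull {v}" using ch_scale[OF ch_base[of v "{v}"]] by simp
  qed
qed



definition rayof :: "'a::real_vector \<Rightarrow> 'a set" where
  "rayof v = {c *\<^sub>R v | c. c \<ge> 0}"

lemma rayof_ch: "rayof v = conic_hull {v}"
  by (simp add: rayof_def ch_sing)

lemma rayof_mem: "c \<ge> 0 \<Longrightarrow> c *\<^sub>R v \<in> rayof v"
  unfolding rayof_def by blast

lemma rayof_self: "v \<in> rayof v"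
  using rayof_mem[of 1 v] by simp

lemma rayof_memE: assumes "x \<in> rayof v" obtains c where "c \<ge> 0" "x = c *\<^sub>R v"
  using assms unfolding rayof_def by blast

lemma rayof_eq:
  assumes "e = c *\<^sub>R v" "c > 0"
  shows "rayof e = rayof v"
proof
  show "rayof e \<subseteq> rayof v"
  proof
    fix x assume "x \<in> rayof e"
    then obtain a where "a \<ge> 0" "x = a *\<^sub>R e" by (rule rayof_memE)
    then have "x = (a * c) *\<^sub>R v" "a * c \<ge> 0" using assms by auto
    then show "x \<in> rayof v" using rayof_mem by metis
  qed
  show "rayof v \<subseteq> rayof e"
  proof
    fix x assume "x \<in> rayof v"
    then obtain a where "a \<ge> 0" "x = a *\<^sub>R v" by (rule rayof_memE)
    then have "x = (a / c) *\<^sub>R e" "a / c \<ge> 0" using assms by auto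
    then show "x \<in> rayof e" using rayof_mem by metis
  qed
qed

lemma rayof_nonzero_mem:
  assumes "e \<in> rayof v" "e \<noteq> 0"
  shows "rayof e = rayof v"
proof -
  obtain c where c: "c \<ge> 0" "e = c *\<^sub>R v" using assms(1) by (rule rayof_memE)
  then have "c \<noteq> 0" using assms(2) by auto
  then show ?thesis using c rayof_eq[of e c v] by simp
qed

lemma is_ray_rayof: "v \<noteq> 0 \<Longrightarrow> is_ray (rayof v)"
  unfolding is_ray_def rayof_def by blast

lemma is_rayE: assumes "is_ray \<rho>" obtains v where "v \<noteq> 0" "\<rho> = rayof v"
  using assms unfolding is_ray_def rayof_def by blast

lemma ch_empty: "conic_hull {} = {0}"
proof -
  have "conic_hull {} \<subseteq> {0}" by (rule ch_minimal) auto
  then show ?thesis using ch_0 by blast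
qed

lemma ch_zero_only:
  assumes "S \<subseteq> {0}" shows "conic_hull S \<subseteq> {0}"
  by (rule ch_minimal) (use assms in auto)

lemma ch_convex: "convex (conic_hull S)"
  unfolding convex_def by (auto intro!: ch_add ch_scale)

lemma face_ch:
  fixes w :: "'a::real_vector \<Rightarrow> real"
  assumes "linear w" "\<forall>x\<in>conic_hull X. w x \<ge> 0"
  shows "{x\<in>conic_hull X. w x = 0} = conic_hull {e\<in>X. w e = 0}"
proof
  show "{x\<in>conic_hull X. w x = 0} \<subseteq> conic_hull {e\<in>X. w e = 0}"
  proof
    fix x assume x: "x \<in> {x\<in>conic_hull X. w x = 0}"
    have "\<And>s. s \<in> X \<Longrightarrow> w s \<ge> 0" using assms(2) ch_base by blast
    then show "x \<in> conic_hull {e\<in>X. w e = 0}" using ch_face[OF assms(1)] x by blast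
  qed
  show "conic_hull {e\<in>X. w e = 0} \<subseteq> {x\<in>conic_hull X. w x = 0}"
  proof (rule ch_minimal)
    show "0 \<in> {x\<in>conic_hull X. w x = 0}" using ch_0 linear_0[OF assms(1)] by blast
    show "x + y \<in> {x\<in>conic_hull X. w x = 0}" if "x \<in> {x\<in>conic_hull X. w x = 0}" "y \<in> {x\<in>conic_hull X. w x = 0}" for x y
      using that ch_add linear_add[OF assms(1)] by fastforce
    show "a *\<^sub>R x \<in> {x\<in>conic_hull X. w x = 0}" if "x \<in> {x\<in>conic_hull X. w x = 0}" "a \<ge> 0" for x a
      using that ch_scale linear_scale[OF assms(1)] by fastforce
    show "{e\<in>X. w e = 0} \<subseteq> {x\<in>conic_hull X. w x = 0}" using ch_base by blast
  qed
qed

lemma ray_face_gen: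
  assumes "cone_face \<rho> (conic_hull X)" "is_ray \<rho>"
  shows "\<exists>x\<in>X. x \<noteq> 0 \<and> \<rho> = rayof x"
proof -
  obtain w :: "'a \<Rightarrow> real" where w: "linear w" "\<forall>x\<in>conic_hull X. w x \<ge> 0"
    "\<rho> = {x\<in>conic_hull X. w x = 0}"
    using assms(1) unfolding cone_face_def by blast
  obtain v where v: "v \<noteq> 0" "\<rho> = rayof v" using assms(2) by (rule is_rayE)
  have rc: "\<rho> = conic_hull {e\<in>X. w e = 0}" using w face_ch by blast
  have "\<exists>x\<in>{e\<in>X. w e = 0}. x \<noteq> 0"
  proof (rule ccontr)
    assume "\<not> ?thesis"
    then have "{e\<in>X. w e = 0} \<subseteq> {0}" by blast
    then have "\<rho> \<subseteq> {0}" using rc ch_zero_only by blast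
    then show False using v rayof_self by blast
  qed
  then obtain x where x: "x \<in> X" "w x = 0" "x \<noteq> 0" by blast
  then have "x \<in> \<rho>" using rc ch_base[of x "{e\<in>X. w e = 0}"] by blast
  then have "rayof x = rayof v" using v x rayof_nonzero_mem by blast
  then show ?thesis using x v by blast
qed



lemma linear_inner_fn: "linear (\<lambda>x. (a::'a::euclidean_space) \<bullet> x)"
  using bounded_linear_inner_right bounded_linear.linear by blast

lemma sharp_pos:
  fixes S :: "'a::euclidean_space set"
  assumes "finite S" "sharp (conic_hull S)"
  obtains u :: "'a \<Rightarrow> real" where "linear u" "\<And>x. x \<in> conic_hull S \<Longrightarrow> x \<noteq> 0 \<Longrightarrow> u x > 0"
proof (cases "S - {0} = {}")
  case True
  then have "conic_hull S \<subseteq> {0}" using ch_zero_only by blast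
  then show ?thesis using that[of "\<lambda>x. 0"] by (auto simp: linear_zero)
next
  case False
  define S' where "S' = S - {0}"
  have fS': "finite S'" using assms(1) S'_def by simp
  have n0: "0 \<notin> convex hull S'"
  proof
    assume "0 \<in> convex hull S'"
    then obtain w where w: "\<forall>x\<in>S'. 0 \<le> w x" "sum w S' = 1" "(\<Sum>x\<in>S'. w x *\<^sub>R x) = 0"
      using convex_hull_finite[OF fS'] by blast
    have "\<exists>s0\<in>S'. w s0 \<noteq> 0"
    proof (rule ccontr)
      assume "\<not> ?thesis" then have "sum w S' = 0" by simp
      then show False using w(2) by simp
    qed
    then obtain s0 where s0: "s0 \<in> S'" "w s0 \<noteq> 0" by blast
    then have ws0: "w s0 > 0" using w(1) by force
    have "w s0 *\<^sub>R s0 + (\<Sum>x\<in>S' - {s0}. w x *\<^sub>R x) = 0"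
      using w(3) sum.remove[OF fS' s0(1), of "\<lambda>x. w x *\<^sub>R x"] by simp
    then have h: "w s0 *\<^sub>R s0 = - (\<Sum>x\<in>S' - {s0}. w x *\<^sub>R x)"
      by (simp add: eq_neg_iff_add_eq_0)
    have "- s0 = (1 / w s0) *\<^sub>R (- (w s0 *\<^sub>R s0))" using ws0 by simp
    also have "\<dots> = (1 / w s0) *\<^sub>R (\<Sum>x\<in>S' - {s0}. w x *\<^sub>R x)" using h by simp
    finally have "- s0 = (1 / w s0) *\<^sub>R (\<Sum>x\<in>S' - {s0}. w x *\<^sub>R x)" .
    moreover have "(\<Sum>x\<in>S' - {s0}. w x *\<^sub>R x) \<in> conic_hull S"
      by (rule chI[of "S' - {s0}" S w]) (use fS' w(1) S'_def in auto)
    ultimately have "- s0 \<in> conic_hull S" using ch_scale[of _ S "1 / w s0"] ws0 by simp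
    moreover have "s0 \<in> conic_hull S" using s0 S'_def ch_base by blast
    ultimately have "s0 = 0" using assms(2) unfolding sharp_def by blast
    then show False using s0 S'_def by blast
  qed
  have "convex (convex hull S')" "closed (convex hull S')"
    by (simp_all add: compact_imp_closed finite_imp_compact_convex_hull fS')
  then obtain a b where ab: "a \<noteq> 0" "0 < b" "\<forall>x\<in>convex hull S'. a \<bullet> x > b"
    using separating_hyperplane_closed_0 n0 by blast
  have lin: "linear (\<lambda>x. a \<bullet> x)" by (rule linear_inner_fn)
  have pos: "a \<bullet> s > 0" if "s \<in> S'" for s
    using ab(2,3) hull_subset[of S' convex] that by force
  have nn: "\<And>s. s \<in> S \<Longrightarrow> a \<bullet> s \<ge> 0"
    using pos S'_def by (metis Diff_iff inner_zero_right less_le singletonD order_refl)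
  show ?thesis
  proof (rule that[OF lin])
    fix x assume x: "x \<in> conic_hull S" "x \<noteq> 0"
    have ge: "a \<bullet> x \<ge> 0" using ch_linear_nonneg[OF lin nn x(1)] .
    show "a \<bullet> x > 0"
    proof (rule ccontr)
      assume "\<not> a \<bullet> x > 0"
      then have "a \<bullet> x = 0" using ge by simp
      then have "x \<in> conic_hull {s\<in>S. a \<bullet> s = 0}" using ch_face[OF lin nn x(1)] by blast
      moreover have "{s\<in>S. a \<bullet> s = 0} \<subseteq> {0}" using pos S'_def by force
      ultimately show False using ch_zero_only x(2) by blast
    qed
  qed
qed

lemma zero_face:
  fixes S :: "'a::euclidean_space set"
  assumes "finite S" "sharp (conic_hull S)"
  shows "cone_face {0} (conic_hull S)"
proof -
  obtain u :: "'a \<Rightarrow> real" where u: "linear u" "\<And>x. x \<in> conic_hull S \<Longrightarrow> x \<noteq> 0 \<Longrightarrow> u x > 0"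
    using sharp_pos[OF assms] by blast
  have "{0} = {x\<in>conic_hull S. u x = 0}" using u ch_0 linear_0[OF u(1)] by force
  moreover have "\<forall>x\<in>conic_hull S. u x \<ge> 0" using u linear_0[OF u(1)] by (metis less_le order_refl)
  ultimately show ?thesis unfolding cone_face_def using u(1) by blast
qed



lemma linear_combo_fn:
  fixes u :: "'a::euclidean_space \<Rightarrow> real"
  assumes "linear u"
  shows "linear (\<lambda>x. b * u x - a \<bullet> x)"
proof (rule linearI)
  fix x y show "b * u (x + y) - a \<bullet> (x + y) = (b * u x - a \<bullet> x) + (b * u y - a \<bullet> y)"
    using linear_add[OF assms] by (simp add: inner_add_right algebra_simps)
next
  fix c :: real and x show "b * u (c *\<^sub>R x) - a \<bullet> (c *\<^sub>R x) = c *\<^sub>R (b * u x - a \<bullet> x)"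
    using linear_scale[OF assms] by (simp add: algebra_simps)
qed

lemma ext_gens:
  fixes S :: "'a::euclidean_space set"
  assumes "finite S" "sharp (conic_hull S)"
  obtains E where "finite E" "0 \<notin> E" "E \<subseteq> conic_hull S" "conic_hull E = conic_hull S"
    "\<And>e. e \<in> E \<Longrightarrow> cone_face (rayof e) (conic_hull S)"
proof (cases "S - {0} = {}")
  case True
  then have "conic_hull S \<subseteq> {0}" using ch_zero_only by blast
  then have "conic_hull S = {0}" using ch_0 by blast
  then show ?thesis using that[of "{}"] ch_empty by simp
next
  case False
  define \<sigma> where "\<sigma> = conic_hull S"
  obtain u :: "'a \<Rightarrow> real" where u: "linear u" "\<And>x. x \<in> \<sigma> \<Longrightarrow> x \<noteq> 0 \<Longrightarrow> u x > 0"
    using sharp_pos[OF assms] \<sigma>_def by blast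
  define S' where "S' = S - {0}"
  have fS': "finite S'" using assms(1) S'_def by simp
  have us: "u s > 0" if "s \<in> S'" for s using u(2) ch_base[of s S] that S'_def \<sigma>_def by blast
  define T where "T = (\<lambda>s. (1 / u s) *\<^sub>R s) ` S'"
  define P where "P = convex hull T"
  define E where "E = {x. x extreme_point_of P}"
  have fT: "finite T" using fS' T_def by simp
  have ET: "E \<subseteq> T" using extreme_points_of_convex_hull[of T] E_def P_def by simp
  have fE: "finite E" using finite_subset[OF ET fT] .
  have uT: "u t = 1" if ht: "t \<in> T" for t
  proof -
    obtain s where s: "s \<in> S'" "t = (1 / u s) *\<^sub>R s" using ht T_def by blast
    then have "u s > 0" using us by blast
    then show ?thesis using s linear_scale[OF u(1)] by simp
  qed
  have Tsig: "T \<subseteq> \<sigma>"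
  proof
    fix t assume "t \<in> T"
    then obtain s where s: "s \<in> S'" "t = (1 / u s) *\<^sub>R s" using T_def by blast
    then show "t \<in> \<sigma>" using ch_scale[OF ch_base[of s S], of "1 / u s"] us[OF s(1)] S'_def \<sigma>_def by simp
  qed
  have Psig: "P \<subseteq> \<sigma>" unfolding P_def by (rule hull_minimal[OF Tsig]) (simp add: \<sigma>_def ch_convex)
  have convH: "convex {x. u x = 1}"
    unfolding convex_def using linear_add[OF u(1)] linear_scale[OF u(1)]
    by (simp add: algebra_simps)
  have uP: "u q = 1" if "q \<in> P" for q
  proof -
    have "T \<subseteq> {x. u x = 1}" using uT by blast
    then have "P \<subseteq> {x. u x = 1}" unfolding P_def by (rule hull_minimal) (rule convH)
    then show ?thesis using that by blast
  qed
  have key: "(1 / u x) *\<^sub>R x \<in> P" if x: "x \<in> \<sigma>" "x \<noteq> 0" for x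
  proof -
    obtain F c where F: "finite F" "F \<subseteq> S" "\<forall>v\<in>F. c v \<ge> 0" "x = (\<Sum>v\<in>F. c v *\<^sub>R v)"
      using x(1) unfolding \<sigma>_def conic_hull_def by blast
    define F' where "F' = F - {0}"
    have fF': "finite F'" "F' \<subseteq> S'" using F(1,2) F'_def S'_def by auto
    have xF': "x = (\<Sum>v\<in>F'. c v *\<^sub>R v)" unfolding F(4) F'_def
      by (rule sum.mono_neutral_right) (use F(1) in auto)
    have ux: "u x = (\<Sum>v\<in>F'. c v * u v)" using ch_linear_sum[OF u(1) xF'] .
    have uxp: "u x > 0" using u(2) x by blast
    have "(\<Sum>j\<in>F'. (c j * u j / u x) *\<^sub>R ((1 / u j) *\<^sub>R j)) \<in> P"
    proof (rule convex_sum[OF fF'(1)])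
      show "convex P" unfolding P_def by simp
      have "(\<Sum>i\<in>F'. c i * u i / u x) = (\<Sum>i\<in>F'. c i * u i) / u x" by (rule sum_divide_distrib[symmetric])
      then show "(\<Sum>i\<in>F'. c i * u i / u x) = 1" using ux uxp by simp
      show "0 \<le> c i * u i / u x" if hi: "i \<in> F'" for i
      proof -
        have "c i \<ge> 0" using F(3) hi F'_def by blast
        moreover have "u i > 0" using us fF'(2) hi by blast
        ultimately show ?thesis using uxp by simp
      qed
      show "(1 / u i) *\<^sub>R i \<in> P" if hi: "i \<in> F'" for i
      proof -
        have "(1 / u i) *\<^sub>R i \<in> T" using hi fF'(2) unfolding T_def by blast
        then show ?thesis unfolding P_def by (rule hull_inc)
      qed
    qed
    moreover have "(\<Sum>j\<in>F'. (c j * u j / u x) *\<^sub>R ((1 / u j) *\<^sub>R j)) = (1 / u x) *\<^sub>R x"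
    proof -
      have "(\<Sum>j\<in>F'. (c j * u j / u x) *\<^sub>R ((1 / u j) *\<^sub>R j)) = (\<Sum>j\<in>F'. (1 / u x) *\<^sub>R (c j *\<^sub>R j))"
      proof (rule sum.cong[OF refl])
        fix j assume "j \<in> F'"
        then have "u j > 0" using us fF'(2) by blast
        then show "(c j * u j / u x) *\<^sub>R ((1 / u j) *\<^sub>R j) = (1 / u x) *\<^sub>R (c j *\<^sub>R j)" by simp
      qed
      also have "\<dots> = (1 / u x) *\<^sub>R x" using xF' by (simp add: scaleR_sum_right)
      finally show ?thesis .
    qed
    ultimately show ?thesis by simp
  qed
  have PE: "P = convex hull E" unfolding P_def E_def using Krein_Milman_polytope[OF fT] by simp
  have E0: "0 \<notin> E" using ET uT linear_0[OF u(1)] by force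
  have Esig: "E \<subseteq> \<sigma>" using ET Tsig by blast
  have chE: "conic_hull E = \<sigma>"
  proof
    show "conic_hull E \<subseteq> \<sigma>" unfolding \<sigma>_def by (rule ch_subset_cone) (use Esig \<sigma>_def in simp)
    show "\<sigma> \<subseteq> conic_hull E"
    proof
      fix x assume x: "x \<in> \<sigma>"
      show "x \<in> conic_hull E"
      proof (cases "x = 0")
        case True then show ?thesis using ch_0 by simp
      next
        case False
        have q: "(1 / u x) *\<^sub>R x \<in> convex hull E" using key[OF x False] PE by simp
        have "E \<subseteq> conic_hull E" using ch_base by blast
        then have "convex hull E \<subseteq> conic_hull E" by (rule hull_minimal) (rule ch_convex)
        then have "(1 / u x) *\<^sub>R x \<in> conic_hull E" using q by blast
        then have "u x *\<^sub>R ((1 / u x) *\<^sub>R x) \<in> conic_hull E"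
          by (rule ch_scale) (use u(2)[OF x False] in simp)
        then show ?thesis using u(2)[OF x False] by simp
      qed
    qed
  qed
  have faces: "cone_face (rayof e) \<sigma>" if e: "e \<in> E" for e
  proof -
    have "{e} face_of P" using e E_def face_of_singleton by blast
    then have "{e} exposed_face_of P" using exposed_face_of_polyhedron polyhedron_convex_hull[OF fT] P_def by blast
    then obtain a b where ab: "P \<subseteq> {x. a \<bullet> x \<le> b}" "{e} = P \<inter> {x. a \<bullet> x = b}"
      unfolding exposed_face_of_def by blast
    define f where "f x = b * u x - a \<bullet> x" for x
    have lf: "linear f" unfolding f_def by (rule linear_combo_fn[OF u(1)])
    have eP: "e \<in> P" "a \<bullet> e = b" using ab(2) by auto
    have ue: "u e = 1" using uP eP by simp
    have decomp: "f x = u x * (b - a \<bullet> ((1 / u x) *\<^sub>R x))" if "x \<in> \<sigma>" "x \<noteq> 0" for x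
      using u(2)[OF that] by (simp add: f_def algebra_simps)
    have nn: "\<forall>x\<in>\<sigma>. f x \<ge> 0"
    proof
      fix x assume x: "x \<in> \<sigma>"
      show "f x \<ge> 0"
      proof (cases "x = 0")
        case True then show ?thesis using linear_0[OF lf] by simp
      next
        case False
        have "a \<bullet> ((1 / u x) *\<^sub>R x) \<le> b" using key[OF x False] ab(1) by blast
        then show ?thesis using decomp[OF x False] u(2)[OF x False] by simp
      qed
    qed
    have eq: "rayof e = {x\<in>\<sigma>. f x = 0}"
    proof
      show "rayof e \<subseteq> {x\<in>\<sigma>. f x = 0}"
      proof
        fix y assume "y \<in> rayof e"
        then obtain c where c: "c \<ge> 0" "y = c *\<^sub>R e" by (rule rayof_memE)
        have "e \<in> conic_hull S" using Esig e \<sigma>_def by blast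
        then have "y \<in> \<sigma>" using c ch_scale \<sigma>_def by simp
        moreover have "f y = 0" using c linear_scale[OF u(1)] ue eP(2) by (simp add: f_def)
        ultimately show "y \<in> {x\<in>\<sigma>. f x = 0}" by blast
      qed
      show "{x\<in>\<sigma>. f x = 0} \<subseteq> rayof e"
      proof
        fix x assume x: "x \<in> {x\<in>\<sigma>. f x = 0}"
        show "x \<in> rayof e"
        proof (cases "x = 0")
          case True then show ?thesis using rayof_mem[of 0 e] by simp
        next
          case False
          have xs: "x \<in> \<sigma>" "f x = 0" using x by auto
          have ux: "u x > 0" using u(2) xs(1) False by blast
          then have "a \<bullet> ((1 / u x) *\<^sub>R x) = b" using decomp[OF xs(1) False] xs(2) by simp
          then have "(1 / u x) *\<^sub>R x \<in> {e}" using ab(2) key[OF xs(1) False] by blast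
          then have "x = u x *\<^sub>R e" using ux by auto
          then show ?thesis using rayof_mem[of "u x" e] ux by simp
        qed
      qed
    qed
    show ?thesis unfolding cone_face_def using lf nn eq by blast
  qed
  show ?thesis using that[OF fE E0 Esig[unfolded \<sigma>_def] chE[unfolded \<sigma>_def]] faces \<sigma>_def by blast
qed



lemma lattice_basis:
  fixes N :: "'a::euclidean_space set"
  assumes "is_lattice N"
  obtains B where "finite B" "independent B" "span B = UNIV"
    "N = {x. \<exists>k::'a \<Rightarrow> int. x = (\<Sum>b\<in>B. of_int (k b) *\<^sub>R b)}"
proof -
  obtain B where B: "finite B" "card B = DIM('a)" "span B = UNIV"
    "N = {x. \<exists>k::'a \<Rightarrow> int. x = (\<Sum>b\<in>B. of_int (k b) *\<^sub>R b)}"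
    using assms unfolding is_lattice_def by blast
  have "independent B" using card_eq_dim[of B UNIV] B by (simp add: dim_UNIV)
  then show ?thesis using that B by blast
qed

locale lat =
  fixes B :: "'a::euclidean_space set" and N :: "'a set"
  assumes finB: "finite B" and indB: "independent B" and spB: "span B = UNIV"
    and Ndef: "N = {x. \<exists>k::'a \<Rightarrow> int. x = (\<Sum>b\<in>B. of_int (k b) *\<^sub>R b)}"
begin

definition crd :: "'a \<Rightarrow> 'a \<Rightarrow> real" where "crd x b = representation B x b"

lemma crd_sum_eq: "(\<Sum>b\<in>B. crd x b *\<^sub>R b) = x"
  unfolding crd_def using sum_representation_eq[OF indB _ finB] spB by simp

lemma crd_unique:
  assumes "x = (\<Sum>b\<in>B. c b *\<^sub>R b)" "b0 \<in> B"
  shows "crd x b0 = c b0"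
proof -
  have "(\<Sum>b\<in>B. (crd x b - c b) *\<^sub>R b) = (\<Sum>b\<in>B. crd x b *\<^sub>R b) - (\<Sum>b\<in>B. c b *\<^sub>R b)"
    by (simp only: scaleR_diff_left sum_subtractf)
  also have "\<dots> = 0" using crd_sum_eq[of x] assms(1) by simp
  finally have "(\<Sum>b\<in>B. (crd x b - c b) *\<^sub>R b) = 0" .
  moreover have H: "\<forall>c. (\<Sum>v\<in>B. c v *\<^sub>R v) = 0 \<longrightarrow> (\<forall>v\<in>B. c v = 0)"
    using indB by (simp add: independent_explicit)
  ultimately have "\<forall>b\<in>B. crd x b - c b = 0" using H[rule_format, of "\<lambda>b. crd x b - c b"] by simp
  then show ?thesis using assms(2) by simp
qed

lemma crd_add: "b \<in> B \<Longrightarrow> crd (x + y) b = crd x b + crd y b"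
proof (rule crd_unique)
  have "x + y = (\<Sum>b\<in>B. crd x b *\<^sub>R b) + (\<Sum>b\<in>B. crd y b *\<^sub>R b)" by (simp only: crd_sum_eq)
  then show "x + y = (\<Sum>b\<in>B. (crd x b + crd y b) *\<^sub>R b)" by (simp only: scaleR_add_left sum.distrib)
qed

lemma crd_scale: "b \<in> B \<Longrightarrow> crd (a *\<^sub>R x) b = a * crd x b"
proof (rule crd_unique)
  have "a *\<^sub>R x = a *\<^sub>R (\<Sum>b\<in>B. crd x b *\<^sub>R b)" by (simp only: crd_sum_eq)
  then show "a *\<^sub>R x = (\<Sum>b\<in>B. (a * crd x b) *\<^sub>R b)" by (simp add: scaleR_sum_right)
qed

lemma crd_diff: "b \<in> B \<Longrightarrow> crd (x - y) b = crd x b - crd y b"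
  using crd_add[of b y "x - y"] by simp

lemma N_iff: "x \<in> N \<longleftrightarrow> (\<exists>k::'a \<Rightarrow> int. \<forall>b\<in>B. crd x b = of_int (k b))"
proof
  assume "x \<in> N"
  then obtain k :: "'a \<Rightarrow> int" where k: "x = (\<Sum>b\<in>B. of_int (k b) *\<^sub>R b)" using Ndef by blast
  have "\<forall>b\<in>B. crd x b = of_int (k b)"
  proof
    fix b assume "b \<in> B" then show "crd x b = of_int (k b)" by (rule crd_unique[OF k])
  qed
  then show "\<exists>k::'a \<Rightarrow> int. \<forall>b\<in>B. crd x b = of_int (k b)" by (rule exI[of _ k])
next
  assume "\<exists>k::'a \<Rightarrow> int. \<forall>b\<in>B. crd x b = of_int (k b)"
  then obtain k :: "'a \<Rightarrow> int" where k: "\<forall>b\<in>B. crd x b = of_int (k b)" by blast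
  have "x = (\<Sum>b\<in>B. crd x b *\<^sub>R b)" by (simp only: crd_sum_eq)
  also have "\<dots> = (\<Sum>b\<in>B. of_int (k b) *\<^sub>R b)" using k by simp
  finally have e: "x = (\<Sum>b\<in>B. of_int (k b) *\<^sub>R b)" .
  show "x \<in> N" unfolding Ndef using e by (intro CollectI exI[of _ k])
qed

lemma N_I: "(\<And>b. b \<in> B \<Longrightarrow> crd x b = of_int (k b)) \<Longrightarrow> x \<in> N"
proof -
  assume h: "\<And>b. b \<in> B \<Longrightarrow> crd x b = of_int (k b)"
  have "\<exists>k::'a\<Rightarrow>int. \<forall>b\<in>B. crd x b = of_int (k b)" using h by (intro exI[of _ k]) simp
  then show ?thesis using N_iff by simp
qed

lemma N_ex: "x \<in> N \<Longrightarrow> \<exists>k::'a\<Rightarrow>int. \<forall>b\<in>B. crd x b = of_int (k b)"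
  using N_iff by simp

lemma N_E: assumes "x \<in> N" obtains k :: "'a \<Rightarrow> int" where "\<And>b. b \<in> B \<Longrightarrow> crd x b = of_int (k b)"
proof -
  have "\<exists>k::'a\<Rightarrow>int. \<forall>b\<in>B. crd x b = of_int (k b)" using assms N_iff by simp
  then obtain k :: "'a\<Rightarrow>int" where k: "\<forall>b\<in>B. crd x b = of_int (k b)" by (rule exE)
  show thesis by (rule that) (use k in simp)
qed

lemma N_diff: "x \<in> N \<Longrightarrow> y \<in> N \<Longrightarrow> x - y \<in> N"
proof -
  assume "x \<in> N" "y \<in> N"
  assume hx: "x \<in> N" and hy: "y \<in> N"
  obtain k :: "'a \<Rightarrow> int" where k0: "\<forall>b\<in>B. crd x b = of_int (k b)" using N_ex[OF hx] by (rule exE)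
  have k: "\<And>b. b \<in> B \<Longrightarrow> crd x b = of_int (k b)" using k0 by simp
  obtain l :: "'a \<Rightarrow> int" where l0: "\<forall>b\<in>B. crd y b = of_int (l b)" using N_ex[OF hy] by (rule exE)
  have l: "\<And>b. b \<in> B \<Longrightarrow> crd y b = of_int (l b)" using l0 by simp
  note kl = k l
  show ?thesis by (rule N_I[of _ "\<lambda>b. k b - l b"]) (simp add: crd_diff kl)
qed

lemma N_add: "x \<in> N \<Longrightarrow> y \<in> N \<Longrightarrow> x + y \<in> N"
proof -
  assume "x \<in> N" "y \<in> N"
  assume hx: "x \<in> N" and hy: "y \<in> N"
  obtain k :: "'a \<Rightarrow> int" where k0: "\<forall>b\<in>B. crd x b = of_int (k b)" using N_ex[OF hx] by (rule exE)
  have k: "\<And>b. b \<in> B \<Longrightarrow> crd x b = of_int (k b)" using k0 by simp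
  obtain l :: "'a \<Rightarrow> int" where l0: "\<forall>b\<in>B. crd y b = of_int (l b)" using N_ex[OF hy] by (rule exE)
  have l: "\<And>b. b \<in> B \<Longrightarrow> crd y b = of_int (l b)" using l0 by simp
  note kl = k l
  show ?thesis by (rule N_I[of _ "\<lambda>b. k b + l b"]) (simp add: crd_add kl)
qed

lemma N_int_scale: "x \<in> N \<Longrightarrow> of_int i *\<^sub>R x \<in> N"
proof -
  assume hx: "x \<in> N"
  obtain k :: "'a \<Rightarrow> int" where k0: "\<forall>b\<in>B. crd x b = of_int (k b)" using N_ex[OF hx] by (rule exE)
  have k: "\<And>b. b \<in> B \<Longrightarrow> crd x b = of_int (k b)" using k0 by simp
  show ?thesis by (rule N_I[of _ "\<lambda>b. i * k b"]) (simp add: crd_scale k)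
qed

lemma N_nat_scale: "x \<in> N \<Longrightarrow> of_nat n *\<^sub>R x \<in> N"
  using N_int_scale[of x "int n"] by simp

lemma N_zero: "0 \<in> N"
proof -
  show ?thesis unfolding Ndef by (intro CollectI exI[of _ "\<lambda>_. 0"]) simp
qed

lemma B_sub_N: "B \<subseteq> N"
proof
  fix b0 assume b0: "b0 \<in> B"
  have "(\<Sum>b\<in>B. of_int (if b = b0 then 1 else 0) *\<^sub>R b) = (\<Sum>b\<in>B. if b = b0 then b else 0)"
    by (rule sum.cong) auto
  also have "\<dots> = b0" using b0 finB by (simp add: sum.delta')
  finally have e: "b0 = (\<Sum>b\<in>B. of_int (if b = b0 then 1 else 0) *\<^sub>R b)" by simp
  show "b0 \<in> N" unfolding Ndef using e by (intro CollectI exI[of _ "\<lambda>b. if b = b0 then 1 else 0"]) simp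
qed

definition is_prim :: "'a set \<Rightarrow> 'a \<Rightarrow> bool" where
  "is_prim \<rho> v \<longleftrightarrow> v \<in> N \<inter> \<rho> \<and> v \<noteq> 0 \<and> (\<forall>w\<in>N \<inter> \<rho>. \<exists>k::nat. w = of_nat k *\<^sub>R v)"

lemma prim_unique:
  assumes "is_prim \<rho> p" "is_prim \<rho> q" shows "q = p"
proof -
  obtain k :: nat where k: "q = of_nat k *\<^sub>R p" using assms unfolding is_prim_def by blast
  obtain l :: nat where l: "p = of_nat l *\<^sub>R q" using assms unfolding is_prim_def by blast
  have e: "p = (of_nat l * of_nat k) *\<^sub>R p" using k l by (metis scaleR_scaleR)
  have "(1 - of_nat l * of_nat k) *\<^sub>R p = p - (of_nat l * of_nat k) *\<^sub>R p" by (simp add: scaleR_diff_left)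
  also have "\<dots> = 0" using e by simp
  finally have "(1 - of_nat l * of_nat k) *\<^sub>R p = 0" .
  then have "(of_nat l * of_nat k :: real) = 1" using assms(1) unfolding is_prim_def by simp
  then have "l * k = 1" by (metis of_nat_1 of_nat_eq_iff of_nat_mult)
  then have "k = 1" by simp
  then show ?thesis using k by simp
qed

lemma prim_exists:
  assumes v0: "v0 \<in> N" "v0 \<noteq> 0"
  shows "\<exists>p. is_prim (rayof v0) p"
proof -
  have "\<exists>b1\<in>B. crd v0 b1 \<noteq> 0"
  proof (rule ccontr)
    assume "\<not> ?thesis"
    then have "(\<Sum>b\<in>B. crd v0 b *\<^sub>R b) = 0" by simp
    then show False using crd_sum_eq[of v0] v0(2) by simp
  qed
  then obtain b1 where b1: "b1 \<in> B" "crd v0 b1 \<noteq> 0" by blast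
  obtain k0 :: "'a \<Rightarrow> int" where k0: "\<forall>b\<in>B. crd v0 b = of_int (k0 b)" using N_ex[OF v0(1)] by (rule exE)
  define zi where "zi = k0 b1"
  have z: "crd v0 b1 = of_int zi" using k0 b1 zi_def by simp
  define az where "az = nat \<bar>zi\<bar>"
  have azr: "real az = \<bar>crd v0 b1\<bar>" using z az_def by simp
  have azp: "az > 0" using b1(2) z az_def by simp
  define M where "M = {n::nat. n > 0 \<and> (real n / real az) *\<^sub>R v0 \<in> N}"
  have "az \<in> M" using azp v0(1) M_def by simp
  define n1 where "n1 = (LEAST n. n \<in> M)"
  have n1M: "n1 \<in> M" using LeastI[of "\<lambda>n. n \<in> M" az] \<open>az \<in> M\<close> n1_def by simp
  have n1min: "\<And>n. n \<in> M \<Longrightarrow> n1 \<le> n" using Least_le n1_def by metis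
  define p where "p = (real n1 / real az) *\<^sub>R v0"
  have n1p: "n1 > 0" using n1M M_def by simp
  have pN: "p \<in> N" using n1M M_def p_def by simp
  have pr: "p \<in> rayof v0" unfolding p_def by (rule rayof_mem) simp
  have p0: "p \<noteq> 0" using n1p azp v0(2) p_def by simp
  have mult: "\<exists>k::nat. w = of_nat k *\<^sub>R p" if w: "w \<in> N" "w \<in> rayof v0" for w
  proof -
    obtain t where t: "t \<ge> 0" "w = t *\<^sub>R v0" using w(2) by (rule rayof_memE)
    obtain kw :: "'a \<Rightarrow> int" where kw: "\<forall>b\<in>B. crd w b = of_int (kw b)" using N_ex[OF w(1)] by (rule exE)
    have "crd w b1 = t * crd v0 b1" using t crd_scale b1(1) by simp
    then have "t * crd v0 b1 = of_int (kw b1)" using kw b1 by simp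
    then have "t * real az = of_int \<bar>kw b1\<bar>" using azr t(1)
      by (metis abs_mult abs_of_nonneg of_int_abs)
    then have tm: "t * real az = real (nat \<bar>kw b1\<bar>)" by simp
    define m where "m = nat \<bar>kw b1\<bar>"
    have tm': "t = real m / real az" using tm azp m_def by (simp add: field_simps)
    define q where "q = m div n1"
    define r where "r = m mod n1"
    have mqr: "m = q * n1 + r" using q_def r_def by simp
    have rlt: "r < n1" using r_def n1p by simp
    have mr: "real m = real q * real n1 + real r" using mqr by simp
    have azr0: "real az \<noteq> 0" using azp by simp
    have "w - of_nat q *\<^sub>R p = (real m / real az - real q * (real n1 / real az)) *\<^sub>R v0"
      unfolding p_def t(2) tm' by (simp add: scaleR_diff_left)
    also have "real m / real az - real q * (real n1 / real az) = real r / real az"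
      using mr azr0 by (simp add: field_simps)
    finally have "w - of_nat q *\<^sub>R p = (real r / real az) *\<^sub>R v0" .
    moreover have "w - of_nat q *\<^sub>R p \<in> N" using N_diff[OF w(1) N_nat_scale[OF pN]] .
    ultimately have rN: "(real r / real az) *\<^sub>R v0 \<in> N" by simp
    have "r = 0"
    proof (rule ccontr)
      assume "r \<noteq> 0"
      then have "r \<in> M" using rN M_def by simp
      then show False using n1min rlt by fastforce
    qed
    then have mr0: "real m = real q * real n1" using mr by simp
    have "w = (real m / real az) *\<^sub>R v0" unfolding t(2) tm' by simp
    also have "real m / real az = real q * (real n1 / real az)" using mr0 by simp
    finally have "w = of_nat q *\<^sub>R p" unfolding p_def by simp
    then show ?thesis by blast
  qed
  have "is_prim (rayof v0) p" unfolding is_prim_def using pN pr p0 mult by blast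
  then show ?thesis by blast
qed

lemma prim_gen_is_prim:
  assumes "v0 \<in> N" "v0 \<noteq> 0"
  shows "is_prim (rayof v0) (prim_gen N (rayof v0))"
proof -
  obtain p where p: "is_prim (rayof v0) p" using prim_exists[OF assms] by blast
  have "prim_gen N (rayof v0) = p"
    unfolding prim_gen_def
  proof (rule the_equality)
    show "p \<in> N \<inter> rayof v0 \<and> p \<noteq> 0 \<and> (\<forall>w\<in>N \<inter> rayof v0. \<exists>k::nat. w = of_nat k *\<^sub>R p)"
      using p unfolding is_prim_def by blast
    show "\<And>v. v \<in> N \<inter> rayof v0 \<and> v \<noteq> 0 \<and> (\<forall>w\<in>N \<inter> rayof v0. \<exists>k::nat. w = of_nat k *\<^sub>R v) \<Longrightarrow> v = p"
      using prim_unique[OF p] unfolding is_prim_def by blast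
  qed
  then show ?thesis using p by simp
qed

lemma prim_gen_props:
  assumes "v0 \<in> N" "v0 \<noteq> 0" "\<rho> = rayof v0"
  shows "prim_gen N \<rho> \<in> N" "prim_gen N \<rho> \<in> \<rho>" "prim_gen N \<rho> \<noteq> 0" "rayof (prim_gen N \<rho>) = \<rho>"
    "\<And>w. w \<in> N \<Longrightarrow> w \<in> \<rho> \<Longrightarrow> \<exists>k::nat. w = of_nat k *\<^sub>R prim_gen N \<rho>"
  using prim_gen_is_prim[OF assms(1,2)] assms(3) rayof_nonzero_mem unfolding is_prim_def by blast+

end



lemma sub_0: "real_subring R \<Longrightarrow> 0 \<in> R" unfolding real_subring_def by blast
lemma sub_1: "real_subring R \<Longrightarrow> 1 \<in> R" unfolding real_subring_def by blast
lemma sub_add: "real_subring R \<Longrightarrow> x \<in> R \<Longrightarrow> y \<in> R \<Longrightarrow> x + y \<in> R" unfolding real_subring_def by blast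
lemma sub_diff: "real_subring R \<Longrightarrow> x \<in> R \<Longrightarrow> y \<in> R \<Longrightarrow> x - y \<in> R" unfolding real_subring_def by blast
lemma sub_mult: "real_subring R \<Longrightarrow> x \<in> R \<Longrightarrow> y \<in> R \<Longrightarrow> x * y \<in> R" unfolding real_subring_def by blast
lemma sub_uminus: "real_subring R \<Longrightarrow> x \<in> R \<Longrightarrow> - x \<in> R" using sub_diff[of R 0 x] sub_0 by simp

lemma sub_nat: assumes "real_subring R" shows "real n \<in> R"
proof (induction n)
  case 0 then show ?case using sub_0[OF assms] by simp
next
  case (Suc n)
  have "real n + 1 \<in> R" using sub_add[OF assms Suc sub_1[OF assms]] .
  then show ?case by (simp add: add.commute)
qed

lemma sub_int: assumes "real_subring R" shows "real_of_int k \<in> R"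
proof (cases "k \<ge> 0")
  case True
  then have e: "real_of_int k = real (nat k)" by simp
  show ?thesis unfolding e by (rule sub_nat[OF assms])
next
  case False
  then have e: "real_of_int k = - real (nat (- k))" by simp
  show ?thesis unfolding e by (rule sub_uminus[OF assms sub_nat[OF assms]])
qed

lemma sub_sum: "real_subring R \<Longrightarrow> (\<And>i. i \<in> A \<Longrightarrow> f i \<in> R) \<Longrightarrow> sum f A \<in> R"
proof (induction A rule: infinite_finite_induct)
  case (infinite A) then show ?case by (simp add: sub_0)
next
  case empty then show ?case by (simp add: sub_0)
next
  case (insert x F)
  have "f x + sum f F \<in> R" using sub_add[OF insert.prems(1)] insert.prems(2) insert.IH[OF insert.prems(1)] by simp
  then show ?case using insert.hyps by simp
qed

section \<open>R-span\<close>

lemma RspanI: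
  assumes "finite F" "F \<subseteq> S" "\<forall>v\<in>F. c v \<in> R" "x = (\<Sum>v\<in>F. c v *\<^sub>R v)"
  shows "x \<in> Rspan R S"
  unfolding Rspan_def using assms by (intro CollectI exI[of _ F] exI[of _ c]) simp

lemma RspanE:
  assumes "x \<in> Rspan R S"
  obtains F c where "finite F" "F \<subseteq> S" "\<forall>v\<in>F. c v \<in> R" "x = (\<Sum>v\<in>F. c v *\<^sub>R v)"
  using assms unfolding Rspan_def by blast

lemma Rspan_0: "real_subring R \<Longrightarrow> 0 \<in> Rspan R S"
  by (rule RspanI[of "{}"]) auto

lemma Rspan_base: "real_subring R \<Longrightarrow> v \<in> S \<Longrightarrow> v \<in> Rspan R S"
  by (rule RspanI[of "{v}" _ "\<lambda>_. 1"]) (auto simp: sub_1)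

lemma Rspan_add:
  assumes R: "real_subring R" and "x \<in> Rspan R S" "y \<in> Rspan R S"
  shows "x + y \<in> Rspan R S"
proof -
  obtain F1 c1 where 1: "finite F1" "F1 \<subseteq> S" "\<forall>v\<in>F1. c1 v \<in> R" "x = (\<Sum>v\<in>F1. c1 v *\<^sub>R v)"
    using assms(2) by (rule RspanE)
  obtain F2 c2 where 2: "finite F2" "F2 \<subseteq> S" "\<forall>v\<in>F2. c2 v \<in> R" "y = (\<Sum>v\<in>F2. c2 v *\<^sub>R v)"
    using assms(3) by (rule RspanE)
  define c where "c v = (if v \<in> F1 then c1 v else 0) + (if v \<in> F2 then c2 v else 0)" for v
  have "(\<Sum>v\<in>F1 \<union> F2. c v *\<^sub>R v) = (\<Sum>v\<in>F1 \<union> F2. (if v \<in> F1 then c1 v else 0) *\<^sub>R v)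
        + (\<Sum>v\<in>F1 \<union> F2. (if v \<in> F2 then c2 v else 0) *\<^sub>R v)"
    unfolding c_def by (simp only: scaleR_add_left sum.distrib)
  also have "\<dots> = x + y" using 1 2 by (simp add: sum_if_restrict)
  finally have e: "x + y = (\<Sum>v\<in>F1 \<union> F2. c v *\<^sub>R v)" by simp
  have "\<forall>v\<in>F1 \<union> F2. c v \<in> R" using 1(3) 2(3) unfolding c_def by (simp add: sub_add sub_0 R)
  then show ?thesis using 1(1,2) 2(1,2) e by (intro RspanI[of "F1 \<union> F2" S c]) auto
qed

lemma Rspan_scale:
  assumes R: "real_subring R" and "x \<in> Rspan R S" "a \<in> R"
  shows "a *\<^sub>R x \<in> Rspan R S"
proof -
  obtain F1 c1 where 1: "finite F1" "F1 \<subseteq> S" "\<forall>v\<in>F1. c1 v \<in> R" "x = (\<Sum>v\<in>F1. c1 v *\<^sub>R v)"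
    using assms(2) by (rule RspanE)
  have "a *\<^sub>R x = (\<Sum>v\<in>F1. (a * c1 v) *\<^sub>R v)" using 1 by (simp add: scaleR_sum_right)
  moreover have "\<forall>v\<in>F1. a * c1 v \<in> R" using 1(3) assms(3) sub_mult[OF R] by blast
  ultimately show ?thesis using 1(1,2) by (intro RspanI[of F1 S "\<lambda>v. a * c1 v"]) auto
qed

lemma Rspan_uminus: "real_subring R \<Longrightarrow> x \<in> Rspan R S \<Longrightarrow> - x \<in> Rspan R S"
  using Rspan_scale[of R x S "-1"] sub_uminus[OF _ sub_1] by simp

lemma Rspan_diff: "real_subring R \<Longrightarrow> x \<in> Rspan R S \<Longrightarrow> y \<in> Rspan R S \<Longrightarrow> x - y \<in> Rspan R S"
  using Rspan_add[of R x S "- y"] Rspan_uminus[of R y S] by simp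

lemma Rspan_minimal:
  assumes "0 \<in> C" "\<And>x y. x \<in> C \<Longrightarrow> y \<in> C \<Longrightarrow> x + y \<in> C"
    "\<And>x a. x \<in> C \<Longrightarrow> a \<in> R \<Longrightarrow> a *\<^sub>R x \<in> C" "S \<subseteq> C"
  shows "Rspan R S \<subseteq> C"
proof
  fix x assume "x \<in> Rspan R S"
  then obtain F c where 1: "finite F" "F \<subseteq> S" "\<forall>v\<in>F. c v \<in> R" "x = (\<Sum>v\<in>F. c v *\<^sub>R v)"
    by (rule RspanE)
  have "F \<subseteq> S \<longrightarrow> (\<forall>v\<in>F. c v \<in> R) \<longrightarrow> (\<Sum>v\<in>F. c v *\<^sub>R v) \<in> C"
    using 1(1)
  proof (induction F rule: finite_induct)
    case empty then show ?case using assms(1) by simp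
  next
    case (insert a F)
    show ?case
    proof (intro impI)
      assume h: "insert a F \<subseteq> S" "\<forall>v\<in>insert a F. c v \<in> R"
      then have "(\<Sum>v\<in>F. c v *\<^sub>R v) \<in> C" using insert.IH by blast
      moreover have "c a *\<^sub>R a \<in> C" using h assms(3,4) by blast
      ultimately show "(\<Sum>v\<in>insert a F. c v *\<^sub>R v) \<in> C"
        using insert.hyps assms(2) by simp
    qed
  qed
  then show "x \<in> C" using 1 by auto
qed

lemma Rspan_mono: "S \<subseteq> T \<Longrightarrow> Rspan R S \<subseteq> Rspan R T"
  unfolding Rspan_def by blast

lemma Rspan_sum:
  assumes R: "real_subring R" and "finite A" "\<And>i. i \<in> A \<Longrightarrow> f i \<in> Rspan R S"
  shows "sum f A \<in> Rspan R S"
  using assms(2,3)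
proof (induction A rule: finite_induct)
  case empty then show ?case using Rspan_0[OF R] by simp
next
  case (insert x F)
  then have "f x + sum f F \<in> Rspan R S" using Rspan_add[OF R, of "f x" S "sum f F"] by simp
  then show ?case using insert.hyps by simp
qed

section \<open>Dual\<close>

lemma dual_WI: "linear u \<Longrightarrow> (\<And>w. w \<in> W \<Longrightarrow> u w \<in> R) \<Longrightarrow> u \<in> dual_W R W"
  unfolding dual_W_def by blast

lemma dual_W_lin: "u \<in> dual_W R W \<Longrightarrow> linear u" unfolding dual_W_def by blast
lemma dual_W_val: "u \<in> dual_W R W \<Longrightarrow> w \<in> W \<Longrightarrow> u w \<in> R" unfolding dual_W_def by blast

lemma linear_fun_diff: "linear (f::'a::real_vector\<Rightarrow>real) \<Longrightarrow> linear g \<Longrightarrow> linear (\<lambda>x. f x - g x)"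
  by (simp add: linear_compose_sub)
lemma linear_fun_add: "linear (f::'a::real_vector\<Rightarrow>real) \<Longrightarrow> linear g \<Longrightarrow> linear (\<lambda>x. f x + g x)"
  by (simp add: linear_compose_add)
lemma linear_fun_cmul: "linear (f::'a::real_vector\<Rightarrow>real) \<Longrightarrow> linear (\<lambda>x. a * f x)"
  by (rule linearI) (simp_all add: linear_add linear_scale algebra_simps)

lemma dual_diff: assumes "real_subring R" "u \<in> dual_W R W" "v \<in> dual_W R W" shows "(\<lambda>x. u x - v x) \<in> dual_W R W"
proof (rule dual_WI)
  show "linear (\<lambda>x. u x - v x)" using assms(2,3) dual_W_lin linear_fun_diff by blast
  fix w assume "w \<in> W" then show "u w - v w \<in> R" using assms dual_W_val sub_diff by blast
qed
lemma dual_add: assumes "real_subring R" "u \<in> dual_W R W" "v \<in> dual_W R W" shows "(\<lambda>x. u x + v x) \<in> dual_W R W"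
proof (rule dual_WI)
  show "linear (\<lambda>x. u x + v x)" using assms(2,3) dual_W_lin linear_fun_add by blast
  fix w assume "w \<in> W" then show "u w + v w \<in> R" using assms dual_W_val sub_add by blast
qed
lemma dual_cmul: assumes "real_subring R" "a \<in> R" "u \<in> dual_W R W" shows "(\<lambda>x. a * u x) \<in> dual_W R W"
proof (rule dual_WI)
  show "linear (\<lambda>x. a * u x)" using assms(3) dual_W_lin linear_fun_cmul by blast
  fix w assume "w \<in> W" then show "a * u w \<in> R" using assms dual_W_val sub_mult by blast
qed
lemma dual_zero: "real_subring R \<Longrightarrow> (\<lambda>x. 0) \<in> dual_W R W"
  by (rule dual_WI) (simp_all add: sub_0 linear_zero)

lemma dual_sum:
  assumes R: "real_subring R" and "finite A" "\<And>i. i \<in> A \<Longrightarrow> f i \<in> dual_W R W"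
  shows "(\<lambda>x. \<Sum>i\<in>A. f i x) \<in> dual_W R W"
  using assms(2,3)
proof (induction A rule: finite_induct)
  case empty then show ?case using dual_zero[OF R] by simp
next
  case (insert a F)
  have "(\<lambda>x. f a x + (\<Sum>i\<in>F. f i x)) \<in> dual_W R W"
    using dual_add[OF R, of "f a" W "\<lambda>x. \<Sum>i\<in>F. f i x"] insert by simp
  then show ?case using insert.hyps by simp
qed



lemma cone_face_refl: "cone_face X (X::'a::real_vector set)"
  unfolding cone_face_def by (rule exI[of _ "\<lambda>x. 0"]) (simp add: linear_zero)

lemma face_sub: "cone_face \<tau> \<sigma> \<Longrightarrow> \<tau> \<subseteq> \<sigma>"
  unfolding cone_face_def by blast

lemma ray_in_ray:
  assumes "is_ray \<rho>" "\<rho> \<subseteq> rayof p"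
  shows "\<rho> = rayof p"
proof -
  obtain q where q: "q \<noteq> 0" "\<rho> = rayof q" using assms(1) by (rule is_rayE)
  have "q \<in> rayof p" using q assms(2) rayof_self by blast
  then show ?thesis using rayof_nonzero_mem q by blast
qed

lemma face_trans:
  fixes u w :: "'a::real_vector \<Rightarrow> real"
  assumes tH: "\<tau> = conic_hull H" "finite H" and sS: "\<sigma> = conic_hull S0"
    and u: "linear u" "\<forall>x\<in>\<sigma>. u x \<ge> 0" "\<rho> = {x\<in>\<sigma>. u x = 0}"
    and w: "linear w" "\<forall>x\<in>\<tau>. w x \<ge> 0" "\<sigma> \<inter> \<tau> = {x\<in>\<tau>. w x = 0}"
    and rt: "\<rho> \<subseteq> \<tau>"
  shows "cone_face \<rho> \<tau>"
proof -
  define H' where "H' = {h\<in>H. w h > 0}"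
  define t where "t = 1 + (\<Sum>h\<in>H'. \<bar>u h\<bar> / w h)"
  have fH': "finite H'" using tH(2) H'_def by simp
  have tb: "t \<ge> 1 + \<bar>u h\<bar> / w h" if "h \<in> H'" for h
  proof -
    have "\<bar>u h\<bar> / w h \<le> (\<Sum>h\<in>H'. \<bar>u h\<bar> / w h)"
      by (rule member_le_sum) (use that H'_def fH' in auto)
    then show ?thesis unfolding t_def by simp
  qed
  define f where "f x = u x + t * w x" for x
  have lf: "linear f" unfolding f_def by (rule linear_fun_add[OF u(1) linear_fun_cmul[OF w(1)]])
  have wH: "w h \<ge> 0" if "h \<in> H" for h using w(2) ch_base[of h H] tH(1) that by blast
  have fpos: "f h > 0" if "h \<in> H" "w h > 0" for h
  proof -
    have hH': "h \<in> H'" using that H'_def by simp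
    have "t * w h \<ge> (1 + \<bar>u h\<bar> / w h) * w h" using tb[OF hH'] that(2) by (simp add: mult_right_mono)
    also have "(1 + \<bar>u h\<bar> / w h) * w h = w h + \<bar>u h\<bar>" using that(2) by (simp add: field_simps)
    finally have "t * w h \<ge> w h + \<bar>u h\<bar>" .
    then show ?thesis unfolding f_def using that(2) by linarith
  qed
  have hsig: "h \<in> \<sigma>" if "h \<in> H" "w h = 0" for h
  proof -
    have "h \<in> \<tau>" using tH(1) ch_base that(1) by blast
    then have "h \<in> \<sigma> \<inter> \<tau>" using w(3) that(2) by blast
    then show ?thesis by blast
  qed
  have fH: "f h \<ge> 0" if "h \<in> H" for h
  proof (cases "w h > 0")
    case True then show ?thesis using fpos that by force
  next
    case False
    then have "w h = 0" using wH[OF that] by simp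
    then show ?thesis using u(2) hsig[OF that] unfolding f_def by simp
  qed
  have fnn: "\<forall>x\<in>\<tau>. f x \<ge> 0" using ch_linear_nonneg[OF lf fH] tH(1) by blast
  have "\<rho> = {x\<in>\<tau>. f x = 0}"
  proof
    show "\<rho> \<subseteq> {x\<in>\<tau>. f x = 0}"
    proof
      fix x assume x: "x \<in> \<rho>"
      then have "x \<in> \<tau>" "x \<in> \<sigma>" "u x = 0" using rt u(3) by auto
      then have "w x = 0" using w(3) by blast
      then show "x \<in> {x\<in>\<tau>. f x = 0}" using \<open>x \<in> \<tau>\<close> \<open>u x = 0\<close> unfolding f_def by simp
    qed
    show "{x\<in>\<tau>. f x = 0} \<subseteq> \<rho>"
    proof
      fix x assume x: "x \<in> {x\<in>\<tau>. f x = 0}"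
      then have "x \<in> conic_hull {h\<in>H. f h = 0}" using ch_face[OF lf fH] tH(1) by blast
      moreover have "conic_hull {h\<in>H. f h = 0} \<subseteq> \<rho>"
      proof (rule ch_minimal)
        show "0 \<in> \<rho>" using u(3) ch_0 sS linear_0[OF u(1)] by blast
        show "a + b \<in> \<rho>" if "a \<in> \<rho>" "b \<in> \<rho>" for a b
          using that u(3) ch_add sS linear_add[OF u(1)] by force
        show "c *\<^sub>R a \<in> \<rho>" if "a \<in> \<rho>" "c \<ge> 0" for a c
          using that u(3) ch_scale sS linear_scale[OF u(1)] by force
        show "{h\<in>H. f h = 0} \<subseteq> \<rho>"
        proof
          fix h assume h: "h \<in> {h\<in>H. f h = 0}"
          then have "\<not> w h > 0" using fpos by force
          then have "w h = 0" using wH h by force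
          then have "h \<in> \<sigma>" "u h = 0" using hsig h unfolding f_def by auto
          then show "h \<in> \<rho>" using u(3) by blast
        qed
      qed
      ultimately show "x \<in> \<rho>" by blast
    qed
  qed
  then show ?thesis unfolding cone_face_def using lf fnn by blast
qed

locale fanctx = lat B N for B :: "'a::euclidean_space set" and N +
  fixes R :: "real set" and Sig :: "'a set set" and sig :: "'a set"
  assumes PIR: "principal_ideal_subring R" and fan: "N_fan N Sig" and sigin: "sig \<in> Sig"
begin

abbreviation "W \<equiv> Rspan R N"
abbreviation "vp \<equiv> prim_gen N"

lemma Rsub: "real_subring R" using PIR unfolding principal_ideal_subring_def by blast

lemma N_sub_W: "N \<subseteq> W" using Rspan_base[OF Rsub] by blast

lemma cone_in_fan:
  assumes "\<tau> \<in> Sig"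
  obtains S where "finite S" "S \<subseteq> N" "\<tau> = conic_hull S" "sharp \<tau>"
  using assms fan unfolding N_fan_def N_cone_def by blast

lemma fan_finite: "finite Sig" using fan unfolding N_fan_def by blast

lemma face_in: "\<tau> \<in> Sig \<Longrightarrow> cone_face \<rho> \<tau> \<Longrightarrow> \<rho> \<in> Sig"
  using fan unfolding N_fan_def by blast

lemma inter_face: "\<tau>1 \<in> Sig \<Longrightarrow> \<tau>2 \<in> Sig \<Longrightarrow> cone_face (\<tau>1 \<inter> \<tau>2) \<tau>1 \<and> cone_face (\<tau>1 \<inter> \<tau>2) \<tau>2"
  using fan unfolding N_fan_def by blast

lemma cone_rays_fan: "\<tau> \<in> Sig \<Longrightarrow> \<rho> \<in> cone_rays \<tau> \<Longrightarrow> \<rho> \<in> fan_rays Sig"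
  unfolding cone_rays_def fan_rays_def using face_in by blast

lemma cone_rays_finite: "\<tau> \<in> Sig \<Longrightarrow> finite (cone_rays \<tau>)"
proof -
  assume "\<tau> \<in> Sig"
  then have "cone_rays \<tau> \<subseteq> Sig" using cone_rays_fan unfolding fan_rays_def by blast
  then show ?thesis using finite_subset fan_finite by blast
qed

lemma fan_ray_gen:
  assumes "\<rho> \<in> fan_rays Sig"
  shows "\<exists>s\<in>N. s \<noteq> 0 \<and> \<rho> = rayof s"
proof -
  have r: "\<rho> \<in> Sig" "is_ray \<rho>" using assms unfolding fan_rays_def by auto
  obtain S where S: "finite S" "S \<subseteq> N" "\<rho> = conic_hull S" using cone_in_fan[OF r(1)] by blast
  have "cone_face \<rho> (conic_hull S)" using cone_face_refl S(3) by simp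
  then obtain x where "x \<in> S" "x \<noteq> 0" "\<rho> = rayof x" using ray_face_gen r(2) by blast
  then show ?thesis using S(2) by blast
qed

lemma vp_props:
  assumes "\<rho> \<in> fan_rays Sig"
  shows "vp \<rho> \<in> N" "vp \<rho> \<in> \<rho>" "vp \<rho> \<noteq> 0" "rayof (vp \<rho>) = \<rho>"
proof -
  obtain s where s: "s \<in> N" "s \<noteq> 0" "\<rho> = rayof s" using fan_ray_gen[OF assms] by blast
  show "vp \<rho> \<in> N" "vp \<rho> \<in> \<rho>" "vp \<rho> \<noteq> 0" "rayof (vp \<rho>) = \<rho>"
    using prim_gen_props[OF s] by auto
qed

lemma vp_W: "\<rho> \<in> fan_rays Sig \<Longrightarrow> vp \<rho> \<in> W"
  using vp_props(1) N_sub_W by blast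

lemma sig_rays: "\<rho> \<in> cone_rays sig \<Longrightarrow> \<rho> \<in> fan_rays Sig"
  using cone_rays_fan[OF sigin] .

definition G where "G = vp ` cone_rays sig"

lemma G_finite: "finite G" unfolding G_def using cone_rays_finite[OF sigin] by simp

lemma G_sub: "G \<subseteq> sig"
proof
  fix g assume "g \<in> G"
  then obtain \<rho> where r: "\<rho> \<in> cone_rays sig" "g = vp \<rho>" unfolding G_def by blast
  then have "g \<in> \<rho>" using vp_props(2)[OF sig_rays[OF r(1)]] by simp
  moreover have "\<rho> \<subseteq> sig" using r(1) face_sub unfolding cone_rays_def by blast
  ultimately show "g \<in> sig" by blast
qed

lemma sig_G: "sig = conic_hull G"
proof -
  obtain S where S: "finite S" "S \<subseteq> N" "sig = conic_hull S" "sharp sig" using cone_in_fan[OF sigin] by blast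
  obtain E where E: "finite E" "0 \<notin> E" "E \<subseteq> conic_hull S" "conic_hull E = conic_hull S"
    "\<And>e. e \<in> E \<Longrightarrow> cone_face (rayof e) (conic_hull S)"
    using ext_gens[OF S(1)] S(3,4) by metis
  have "E \<subseteq> conic_hull G"
  proof
    fix e assume e: "e \<in> E"
    then have en: "e \<noteq> 0" using E(2) by blast
    have rr: "rayof e \<in> cone_rays sig" unfolding cone_rays_def using E(5)[OF e] S(3) is_ray_rayof[OF en] by simp
    then have "rayof (vp (rayof e)) = rayof e" using vp_props(4)[OF sig_rays[OF rr]] by simp
    then have "e \<in> rayof (vp (rayof e))" using rayof_self by simp
    then obtain c where c: "c \<ge> 0" "e = c *\<^sub>R vp (rayof e)" by (rule rayof_memE)
    have "vp (rayof e) \<in> G" using rr unfolding G_def by blast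
    then have "c *\<^sub>R vp (rayof e) \<in> conic_hull G" using c(1) by (intro ch_scale ch_base)
    then show "e \<in> conic_hull G" using c(2) by simp
  qed
  then have "sig \<subseteq> conic_hull G" using ch_subset_cone E(4) S(3) by metis
  moreover have "conic_hull G \<subseteq> sig" using ch_subset_cone[of G S] G_sub S(3) by simp
  ultimately show ?thesis by blast
qed

lemma sig_sharp_fin: obtains S where "finite S" "S \<subseteq> N" "sig = conic_hull S" "sharp sig"
  using cone_in_fan[OF sigin] by blast

end



context fanctx begin

definition Dc where
  "Dc \<longleftrightarrow> (\<forall>\<rho>0\<in>cone_rays sig. \<exists>m\<in>dual_W R W. \<forall>\<rho>\<in>cone_rays sig. m (vp \<rho>) = (if \<rho> = \<rho>0 then 1 else 0))"

lemma D_fun: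
  assumes "Dc"
  obtains mf where "\<And>\<rho>0. \<rho>0 \<in> cone_rays sig \<Longrightarrow> mf \<rho>0 \<in> dual_W R W"
    "\<And>\<rho>0 \<rho>. \<rho>0 \<in> cone_rays sig \<Longrightarrow> \<rho> \<in> cone_rays sig \<Longrightarrow> mf \<rho>0 (vp \<rho>) = (if \<rho> = \<rho>0 then 1 else 0)"
proof -
  have "\<forall>\<rho>0\<in>cone_rays sig. \<exists>m. m \<in> dual_W R W \<and> (\<forall>\<rho>\<in>cone_rays sig. m (vp \<rho>) = (if \<rho> = \<rho>0 then 1 else 0))"
    using assms unfolding Dc_def by blast
  then obtain mf where "\<forall>\<rho>0\<in>cone_rays sig. mf \<rho>0 \<in> dual_W R W \<and> (\<forall>\<rho>\<in>cone_rays sig. mf \<rho>0 (vp \<rho>) = (if \<rho> = \<rho>0 then 1 else 0))"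
    by (rule bchoice[THEN exE])
  then show ?thesis using that by blast
qed

lemma cone_rays_zero: "cone_rays {0} = {}"
proof -
  have "False" if "\<rho> \<in> cone_rays {0}" for \<rho>
  proof -
    have "\<rho> \<subseteq> {0}" "is_ray \<rho>" using that face_sub unfolding cone_rays_def by auto
    then obtain q where "q \<noteq> 0" "\<rho> = rayof q" by (metis is_rayE)
    then show False using \<open>\<rho> \<subseteq> {0}\<close> rayof_self by blast
  qed
  then show ?thesis by blast
qed

lemma ray_of_sub_ray:
  assumes "\<rho>0 \<in> cone_rays sig" "\<rho> \<in> cone_rays sig" "\<rho> \<subseteq> \<rho>0"
  shows "\<rho> = \<rho>0"
proof -
  have "\<rho>0 = rayof (vp \<rho>0)" using vp_props(4)[OF sig_rays[OF assms(1)]] by simp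
  moreover have "is_ray \<rho>" using assms(2) unfolding cone_rays_def by blast
  ultimately show ?thesis using ray_in_ray assms(3) by metis
qed

lemma ii_D:
  assumes ii: "\<forall>\<tau>. cone_face \<tau> sig \<and> \<tau> \<noteq> sig \<longrightarrow>
                (\<exists>u \<in> perp \<tau> \<inter> dual_W R W. \<forall>\<rho> \<in> cone_rays sig - cone_rays \<tau>. u (vp \<rho>) = 1)"
  shows "Dc"
  unfolding Dc_def
proof
  fix \<rho>0 assume r0: "\<rho>0 \<in> cone_rays sig"
  have r0f: "\<rho>0 \<in> fan_rays Sig" using sig_rays[OF r0] .
  have r0s: "\<rho>0 \<subseteq> sig" using r0 face_sub unfolding cone_rays_def by blast
  obtain S where S: "finite S" "S \<subseteq> N" "sig = conic_hull S" "sharp sig" by (rule sig_sharp_fin)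
  have zf: "cone_face {0} sig" using zero_face[OF S(1)] S(3,4) by simp
  have "{0} \<noteq> sig" using vp_props(2,3)[OF r0f] r0s by blast
  then obtain u0 where u0: "u0 \<in> perp {0} \<inter> dual_W R W" "\<forall>\<rho>\<in>cone_rays sig - cone_rays {0}. u0 (vp \<rho>) = 1"
    using ii zf by blast
  have u0': "\<forall>\<rho>\<in>cone_rays sig. u0 (vp \<rho>) = 1" using u0(2) unfolding cone_rays_zero by simp
  show "\<exists>m\<in>dual_W R W. \<forall>\<rho>\<in>cone_rays sig. m (vp \<rho>) = (if \<rho> = \<rho>0 then 1 else 0)"
  proof (cases "\<rho>0 = sig")
    case True
    have "\<forall>\<rho>\<in>cone_rays sig. \<rho> = \<rho>0"
    proof
      fix \<rho> assume r: "\<rho> \<in> cone_rays sig"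
      have "\<rho> \<subseteq> \<rho>0" using r face_sub True unfolding cone_rays_def by blast
      then show "\<rho> = \<rho>0" using ray_of_sub_ray[OF r0 r] by simp
    qed
    then have "\<forall>\<rho>\<in>cone_rays sig. u0 (vp \<rho>) = (if \<rho> = \<rho>0 then 1 else 0)" using u0' by simp
    moreover have "u0 \<in> dual_W R W" using u0(1) by blast
    ultimately show ?thesis by blast
  next
    case False
    have f0: "cone_face \<rho>0 sig" using r0 unfolding cone_rays_def by blast
    obtain u1 where u1: "u1 \<in> perp \<rho>0 \<inter> dual_W R W" "\<forall>\<rho>\<in>cone_rays sig - cone_rays \<rho>0. u1 (vp \<rho>) = 1"
      using ii f0 False by blast
    have u1z: "u1 (vp \<rho>0) = 0" using u1(1) vp_props(2)[OF r0f] unfolding perp_def by blast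
    have nr: "\<rho> \<notin> cone_rays \<rho>0" if "\<rho> \<in> cone_rays sig" "\<rho> \<noteq> \<rho>0" for \<rho>
    proof
      assume "\<rho> \<in> cone_rays \<rho>0"
      then have "\<rho> \<subseteq> \<rho>0" using face_sub unfolding cone_rays_def by blast
      then show False using ray_of_sub_ray[OF r0 that(1)] that(2) by simp
    qed
    have md: "(\<lambda>x. u0 x - u1 x) \<in> dual_W R W" using dual_diff[OF Rsub] u0(1) u1(1) by blast
    have "\<forall>\<rho>\<in>cone_rays sig. u0 (vp \<rho>) - u1 (vp \<rho>) = (if \<rho> = \<rho>0 then 1 else 0)"
    proof
      fix \<rho> assume r: "\<rho> \<in> cone_rays sig"
      show "u0 (vp \<rho>) - u1 (vp \<rho>) = (if \<rho> = \<rho>0 then 1 else 0)"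
      proof (cases "\<rho> = \<rho>0")
        case True then show ?thesis using u0' r u1z by simp
      next
        case False then show ?thesis using u0' r u1(2) nr[OF r False] by simp
      qed
    qed
    then show ?thesis using md by (intro bexI[of _ "\<lambda>x. u0 x - u1 x"]) simp_all
  qed
qed

lemma iii_ii:
  assumes iii: "\<forall>\<tau>\<in>Sig. \<exists>u \<in> perp (sig \<inter> \<tau>) \<inter> dual_W R W. \<forall>\<rho> \<in> cone_rays sig - cone_rays \<tau>. u (vp \<rho>) = 1"
  shows "\<forall>\<tau>. cone_face \<tau> sig \<and> \<tau> \<noteq> sig \<longrightarrow>
                (\<exists>u \<in> perp \<tau> \<inter> dual_W R W. \<forall>\<rho> \<in> cone_rays sig - cone_rays \<tau>. u (vp \<rho>) = 1)"
proof (intro allI impI)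
  fix \<tau> assume t: "cone_face \<tau> sig \<and> \<tau> \<noteq> sig"
  then have "\<tau> \<in> Sig" using face_in sigin by blast
  then have h: "\<exists>u \<in> perp (sig \<inter> \<tau>) \<inter> dual_W R W. \<forall>\<rho> \<in> cone_rays sig - cone_rays \<tau>. u (vp \<rho>) = 1"
    using iii by (rule bspec[rotated])
  have e: "sig \<inter> \<tau> = \<tau>" using t face_sub by blast
  show "\<exists>u \<in> perp \<tau> \<inter> dual_W R W. \<forall>\<rho> \<in> cone_rays sig - cone_rays \<tau>. u (vp \<rho>) = 1"
    using h unfolding e .
qed

lemma D_iii:
  assumes D: "Dc"
  shows "\<forall>\<tau>\<in>Sig. \<exists>u \<in> perp (sig \<inter> \<tau>) \<inter> dual_W R W. \<forall>\<rho> \<in> cone_rays sig - cone_rays \<tau>. u (vp \<rho>) = 1"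
proof
  fix \<tau> assume t: "\<tau> \<in> Sig"
  obtain mf where mf: "\<And>\<rho>0. \<rho>0 \<in> cone_rays sig \<Longrightarrow> mf \<rho>0 \<in> dual_W R W"
    "\<And>\<rho>0 \<rho>. \<rho>0 \<in> cone_rays sig \<Longrightarrow> \<rho> \<in> cone_rays sig \<Longrightarrow> mf \<rho>0 (vp \<rho>) = (if \<rho> = \<rho>0 then 1 else 0)"
    using D_fun[OF D] by blast
  define A where "A = cone_rays sig - cone_rays \<tau>"
  have fA: "finite A" using cone_rays_finite[OF sigin] A_def by simp
  define m where "m x = (\<Sum>\<rho>\<in>A. mf \<rho> x)" for x
  have mW: "m \<in> dual_W R W" unfolding m_def
  proof (rule dual_sum[OF Rsub fA])
    fix i assume "i \<in> A" then have "i \<in> cone_rays sig" using A_def by simp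
    then show "mf i \<in> dual_W R W" by (rule mf(1))
  qed
  have lm: "linear m" using dual_W_lin[OF mW] .
  have mv: "m (vp \<rho>1) = (if \<rho>1 \<in> A then 1 else 0)" if r1: "\<rho>1 \<in> cone_rays sig" for \<rho>1
  proof -
    have "m (vp \<rho>1) = (\<Sum>\<rho>\<in>A. if \<rho>1 = \<rho> then 1 else 0)"
      unfolding m_def
    proof (rule sum.cong[OF refl])
      fix \<rho> assume "\<rho> \<in> A"
      then have "\<rho> \<in> cone_rays sig" using A_def by simp
      then show "mf \<rho> (vp \<rho>1) = (if \<rho>1 = \<rho> then 1 else 0)" using mf(2) r1 by simp
    qed
    also have "\<dots> = (if \<rho>1 \<in> A then 1 else 0)" using fA by (simp add: sum.delta)
    finally show ?thesis .
  qed
  obtain w :: "'a \<Rightarrow> real" where w: "linear w" "\<forall>x\<in>sig. w x \<ge> 0" "sig \<inter> \<tau> = {x\<in>sig. w x = 0}"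
    using inter_face[OF sigin t] unfolding cone_face_def by blast
  obtain w' :: "'a \<Rightarrow> real" where w': "linear w'" "\<forall>x\<in>\<tau>. w' x \<ge> 0" "sig \<inter> \<tau> = {x\<in>\<tau>. w' x = 0}"
    using inter_face[OF sigin t] unfolding cone_face_def by blast
  obtain H where H: "finite H" "H \<subseteq> N" "\<tau> = conic_hull H" using cone_in_fan[OF t] by blast
  have "\<forall>x\<in>conic_hull G. w x \<ge> 0" using w(2) sig_G by simp
  then have "{x\<in>conic_hull G. w x = 0} = conic_hull {g\<in>G. w g = 0}" by (rule face_ch[OF w(1)])
  then have face_eq: "sig \<inter> \<tau> = conic_hull {g\<in>G. w g = 0}" using w(3) sig_G by simp
  have gz: "m g = 0" if g: "g \<in> {g\<in>G. w g = 0}" for g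
  proof -
    obtain \<rho>' where r': "\<rho>' \<in> cone_rays sig" "g = vp \<rho>'" using g unfolding G_def by blast
    have "g \<in> conic_hull {g\<in>G. w g = 0}" using g by (rule ch_base)
    then have gst: "g \<in> sig \<inter> \<tau>" using face_eq by simp
    have rr: "rayof g = \<rho>'" using vp_props(4)[OF sig_rays[OF r'(1)]] r'(2) by simp
    have rt: "\<rho>' \<subseteq> \<tau>"
    proof
      fix x assume "x \<in> \<rho>'"
      then have "x \<in> rayof g" using rr by simp
      then obtain c where c: "c \<ge> 0" "x = c *\<^sub>R g" by (rule rayof_memE)
      have "g \<in> conic_hull H" using gst H(3) by blast
      then have "c *\<^sub>R g \<in> conic_hull H" using c(1) by (rule ch_scale)
      then show "x \<in> \<tau>" using c(2) H(3) by simp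
    qed
    obtain u :: "'a \<Rightarrow> real" where u: "linear u" "\<forall>x\<in>sig. u x \<ge> 0" "\<rho>' = {x\<in>sig. u x = 0}"
      using r'(1) unfolding cone_rays_def cone_face_def by blast
    have "cone_face \<rho>' \<tau>" by (rule face_trans[OF H(3,1) sig_G u w' rt])
    then have "\<rho>' \<in> cone_rays \<tau>" using r'(1) unfolding cone_rays_def by blast
    then show "m g = 0" using mv[OF r'(1)] r'(2) A_def by simp
  qed
  have "\<forall>x\<in>sig \<inter> \<tau>. m x = 0"
  proof
    fix x assume "x \<in> sig \<inter> \<tau>"
    then have "x \<in> conic_hull {g\<in>G. w g = 0}" using face_eq by simp
    then show "m x = 0" using ch_linear_zero[of m "{g\<in>G. w g = 0}" x] lm gz by blast
  qed
  then have "m \<in> perp (sig \<inter> \<tau>)" unfolding perp_def using lm by simp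
  moreover have "\<forall>\<rho>\<in>cone_rays sig - cone_rays \<tau>. m (vp \<rho>) = 1" using mv A_def by simp
  ultimately show "\<exists>u \<in> perp (sig \<inter> \<tau>) \<inter> dual_W R W. \<forall>\<rho> \<in> cone_rays sig - cone_rays \<tau>. u (vp \<rho>) = 1"
    using mW by blast
qed

end



context fanctx begin

abbreviation "CW \<equiv> c_W N Sig ` dual_W R W"

lemma cW_diff: "c_W N Sig m1 - c_W N Sig m2 = c_W N Sig (\<lambda>x. m1 x - m2 x)"
  unfolding c_W_def by (rule ext) simp

lemma cW_add: "(\<lambda>\<rho>. c_W N Sig m1 \<rho> + c_W N Sig m2 \<rho>) = c_W N Sig (\<lambda>x. m1 x + m2 x)"
  unfolding c_W_def by (rule ext) simp

lemma CW_diff: "a \<in> CW \<Longrightarrow> b \<in> CW \<Longrightarrow> a - b \<in> CW"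
proof -
  assume "a \<in> CW" "b \<in> CW"
  then obtain m1 m2 where m: "m1 \<in> dual_W R W" "a = c_W N Sig m1" "m2 \<in> dual_W R W" "b = c_W N Sig m2" by blast
  have "(\<lambda>x. m1 x - m2 x) \<in> dual_W R W" using dual_diff[OF Rsub m(1,3)] .
  moreover have "a - b = c_W N Sig (\<lambda>x. m1 x - m2 x)" using m(2,4) cW_diff by simp
  ultimately show "a - b \<in> CW" by (intro image_eqI)
qed

lemma CW_add: "a \<in> CW \<Longrightarrow> b \<in> CW \<Longrightarrow> (\<lambda>\<rho>. a \<rho> + b \<rho>) \<in> CW"
proof -
  assume "a \<in> CW" "b \<in> CW"
  then obtain m1 m2 where m: "m1 \<in> dual_W R W" "a = c_W N Sig m1" "m2 \<in> dual_W R W" "b = c_W N Sig m2" by blast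
  have "(\<lambda>x. m1 x + m2 x) \<in> dual_W R W" using dual_add[OF Rsub m(1,3)] .
  moreover have "(\<lambda>\<rho>. a \<rho> + b \<rho>) = c_W N Sig (\<lambda>x. m1 x + m2 x)" using m(2,4) cW_add by simp
  ultimately show "(\<lambda>\<rho>. a \<rho> + b \<rho>) \<in> CW" by (intro image_eqI)
qed

lemma CW_zero: "(\<lambda>_. 0) \<in> CW"
proof -
  have "c_W N Sig (\<lambda>x. 0) = (\<lambda>_. 0)" unfolding c_W_def by (rule ext) simp
  then show ?thesis using dual_zero[OF Rsub, of W] by (intro image_eqI[of _ _ "\<lambda>x. 0"]) simp_all
qed

lemma aW_eq:
  assumes "x - y \<in> CW"
  shows "a_W R N Sig x = a_W R N Sig y"
proof -
  have "x - z \<in> CW \<longleftrightarrow> y - z \<in> CW" for z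
  proof
    assume "x - z \<in> CW"
    then have "(x - z) - (x - y) \<in> CW" using CW_diff assms by blast
    moreover have "(x - z) - (x - y) = y - z" by (rule ext) simp
    ultimately show "y - z \<in> CW" by simp
  next
    assume "y - z \<in> CW"
    then have "(\<lambda>\<rho>. (y - z) \<rho> + (x - y) \<rho>) \<in> CW" using CW_add assms by blast
    moreover have "(\<lambda>\<rho>. (y - z) \<rho> + (x - y) \<rho>) = x - z" by (rule ext) simp
    ultimately show "x - z \<in> CW" by simp
  qed
  then show ?thesis unfolding a_W_def by simp
qed

lemma self_in_aW: "y \<in> R_Sigma1 R Sig \<Longrightarrow> y \<in> a_W R N Sig y"
  unfolding a_W_def using CW_zero by (simp add: fun_diff_def)

lemma i_iff_D: "A_W_sigma R N Sig sig = A_W R N Sig \<longleftrightarrow> Dc"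
proof
  assume i: "A_W_sigma R N Sig sig = A_W R N Sig"
  show "Dc" unfolding Dc_def
  proof
    fix \<rho>0 assume r0: "\<rho>0 \<in> cone_rays sig"
    define x where "x = (\<lambda>\<rho>. if \<rho> = \<rho>0 then (1::real) else 0)"
    have xR: "x \<in> R_Sigma1 R Sig"
      unfolding R_Sigma1_def x_def using sub_0[OF Rsub] sub_1[OF Rsub] sig_rays[OF r0] by auto
    then have "a_W R N Sig x \<in> A_W_sigma R N Sig sig" using i unfolding A_W_def by simp
    then obtain y where y: "y \<in> R_Sigma1 R Sig" "\<forall>\<rho>. \<rho> \<in> cone_rays sig \<longrightarrow> y \<rho> = 0"
      "a_W R N Sig x = a_W R N Sig y"
      unfolding A_W_sigma_def by blast
    have "y \<in> a_W R N Sig x" using y(3) self_in_aW[OF y(1)] by simp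
    then have "x - y \<in> CW" unfolding a_W_def by simp
    then obtain m where m: "m \<in> dual_W R W" "x - y = c_W N Sig m" by blast
    have "\<forall>\<rho>\<in>cone_rays sig. m (vp \<rho>) = (if \<rho> = \<rho>0 then 1 else 0)"
    proof
      fix \<rho> assume r: "\<rho> \<in> cone_rays sig"
      have "(x - y) \<rho> = c_W N Sig m \<rho>" using m(2) by simp
      then show "m (vp \<rho>) = (if \<rho> = \<rho>0 then 1 else 0)"
        using y(2) r sig_rays[OF r] unfolding c_W_def x_def by (simp split: if_splits)
    qed
    then show "\<exists>m\<in>dual_W R W. \<forall>\<rho>\<in>cone_rays sig. m (vp \<rho>) = (if \<rho> = \<rho>0 then 1 else 0)"
      using m(1) by blast
  qed
next
  assume D: "Dc"
  obtain mf where mf: "\<And>\<rho>0. \<rho>0 \<in> cone_rays sig \<Longrightarrow> mf \<rho>0 \<in> dual_W R W"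
    "\<And>\<rho>0 \<rho>. \<rho>0 \<in> cone_rays sig \<Longrightarrow> \<rho> \<in> cone_rays sig \<Longrightarrow> mf \<rho>0 (vp \<rho>) = (if \<rho> = \<rho>0 then 1 else 0)"
    using D_fun[OF D] by blast
  have fA: "finite (cone_rays sig)" using cone_rays_finite[OF sigin] .
  show "A_W_sigma R N Sig sig = A_W R N Sig"
  proof
    show "A_W_sigma R N Sig sig \<subseteq> A_W R N Sig" unfolding A_W_sigma_def A_W_def by blast
    show "A_W R N Sig \<subseteq> A_W_sigma R N Sig sig"
    proof
      fix X assume "X \<in> A_W R N Sig"
      then obtain x where x: "x \<in> R_Sigma1 R Sig" "X = a_W R N Sig x" unfolding A_W_def by blast
      define m where "m z = (\<Sum>\<rho>\<in>cone_rays sig. x \<rho> * mf \<rho> z)" for z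
      have mW: "m \<in> dual_W R W" unfolding m_def
      proof (rule dual_sum[OF Rsub fA])
        fix i assume "i \<in> cone_rays sig"
        then show "(\<lambda>z. x i * mf i z) \<in> dual_W R W"
          using dual_cmul[OF Rsub _ mf(1)] x(1) unfolding R_Sigma1_def by blast
      qed
      have mv: "m (vp \<rho>1) = x \<rho>1" if r1: "\<rho>1 \<in> cone_rays sig" for \<rho>1
      proof -
        have "m (vp \<rho>1) = (\<Sum>\<rho>\<in>cone_rays sig. if \<rho>1 = \<rho> then x \<rho> else 0)"
          unfolding m_def
        proof (rule sum.cong[OF refl])
          fix \<rho> assume "\<rho> \<in> cone_rays sig"
          then show "x \<rho> * mf \<rho> (vp \<rho>1) = (if \<rho>1 = \<rho> then x \<rho> else 0)" using mf(2) r1 by simp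
        qed
        also have "\<dots> = x \<rho>1" using fA r1 by (simp add: sum.delta)
        finally show ?thesis .
      qed
      define y where "y = x - c_W N Sig m"
      have yR: "y \<in> R_Sigma1 R Sig"
        unfolding R_Sigma1_def
      proof (intro CollectI conjI allI impI)
        fix \<rho>
        show "y \<rho> \<in> R"
        proof (cases "\<rho> \<in> fan_rays Sig")
          case True
          have "m (vp \<rho>) \<in> R" using dual_W_val[OF mW vp_W[OF True]] .
          moreover have "x \<rho> \<in> R" using x(1) unfolding R_Sigma1_def by blast
          ultimately show ?thesis unfolding y_def c_W_def using True sub_diff[OF Rsub] by simp
        next
          case False
          then show ?thesis using x(1) sub_0[OF Rsub] unfolding y_def c_W_def R_Sigma1_def by simp
        qed
      next
        fix \<rho> assume "\<rho> \<notin> fan_rays Sig"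
        then show "y \<rho> = 0" using x(1) unfolding y_def c_W_def R_Sigma1_def by simp
      qed
      have y0: "\<forall>\<rho>. \<rho> \<in> cone_rays sig \<longrightarrow> y \<rho> = 0"
        using mv sig_rays unfolding y_def c_W_def by simp
      have "x - y = c_W N Sig m" unfolding y_def by (rule ext) simp
      then have "x - y \<in> CW" using mW by simp
      then have "a_W R N Sig x = a_W R N Sig y" by (rule aW_eq)
      then show "X \<in> A_W_sigma R N Sig sig" unfolding A_W_sigma_def using x(2) yR y0 by blast
    qed
  qed
qed

end



locale rbasis =
  fixes R :: "real set" and Bw :: "'a::real_vector set"
  assumes Rs: "real_subring R" and indep: "R_independent R Bw"
begin

definition repH where
  "repH w H d \<longleftrightarrow> finite H \<and> H \<subseteq> Bw \<and> (\<forall>v. d v \<in> R) \<and> (\<forall>v. v \<notin> H \<longrightarrow> d v = 0) \<and> w = (\<Sum>v\<in>H. d v *\<^sub>R v)"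

lemma rep_extend:
  assumes "repH w H d" "H \<subseteq> H'" "finite H'" "H' \<subseteq> Bw"
  shows "repH w H' d"
proof -
  have z: "\<forall>i\<in>H' - H. d i *\<^sub>R i = 0" using assms(1) unfolding repH_def by simp
  have "(\<Sum>v\<in>H. d v *\<^sub>R v) = (\<Sum>v\<in>H'. d v *\<^sub>R v)"
    by (rule sum.mono_neutral_left[OF assms(3) assms(2) z])
  moreover have "\<forall>v. v \<notin> H' \<longrightarrow> d v = 0" using assms(1,2) unfolding repH_def by blast
  ultimately show ?thesis using assms(1,3,4) unfolding repH_def by simp
qed

lemma rep_unique:
  assumes "repH w H1 d1" "repH w H2 d2"
  shows "d1 = d2"
proof -
  define H where "H = H1 \<union> H2"
  have fH: "finite H" "H \<subseteq> Bw" using assms unfolding repH_def H_def by auto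
  have r1: "repH w H d1" using rep_extend[OF assms(1) _ fH] H_def by simp
  have r2: "repH w H d2" using rep_extend[OF assms(2) _ fH] H_def by simp
  have "(\<Sum>v\<in>H. (d1 v - d2 v) *\<^sub>R v) = (\<Sum>v\<in>H. d1 v *\<^sub>R v) - (\<Sum>v\<in>H. d2 v *\<^sub>R v)"
    by (simp only: scaleR_diff_left sum_subtractf)
  also have "\<dots> = 0" using r1 r2 unfolding repH_def by simp
  finally have z: "(\<Sum>v\<in>H. (d1 v - d2 v) *\<^sub>R v) = 0" .
  have "\<forall>v\<in>H. d1 v - d2 v \<in> R" using r1 r2 sub_diff[OF Rs] unfolding repH_def by simp
  then have "\<forall>v\<in>H. d1 v - d2 v = 0"
    using indep[unfolded R_independent_def, rule_format, of H "\<lambda>v. d1 v - d2 v"] z fH by blast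
  moreover have "\<forall>v. v \<notin> H \<longrightarrow> d1 v = d2 v" using r1 r2 unfolding repH_def by simp
  ultimately show ?thesis
  proof (intro ext)
    fix v show "d1 v = d2 v"
    proof (cases "v \<in> H")
      case True then show ?thesis using \<open>\<forall>v\<in>H. d1 v - d2 v = 0\<close> by simp
    next
      case False then show ?thesis using \<open>\<forall>v. v \<notin> H \<longrightarrow> d1 v = d2 v\<close> by simp
    qed
  qed
qed

lemma rep_exists:
  assumes "w \<in> Rspan R Bw"
  shows "\<exists>H d. repH w H d"
proof -
  obtain F c where F: "finite F" "F \<subseteq> Bw" "\<forall>v\<in>F. c v \<in> R" "w = (\<Sum>v\<in>F. c v *\<^sub>R v)"
    using assms by (rule RspanE)
  define d where "d v = (if v \<in> F then c v else 0)" for v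
  have "w = (\<Sum>v\<in>F. d v *\<^sub>R v)" using F(4) unfolding d_def by simp
  moreover have "\<forall>v. d v \<in> R" using F(3) sub_0[OF Rs] unfolding d_def by simp
  moreover have "\<forall>v. v \<notin> F \<longrightarrow> d v = 0" unfolding d_def by simp
  ultimately have "repH w F d" using F(1,2) unfolding repH_def by blast
  then show ?thesis by blast
qed

definition coef :: "'a \<Rightarrow> 'a \<Rightarrow> real" where
  "coef w = (SOME d. \<exists>H. repH w H d)"

lemma coef_eq: "repH w H d \<Longrightarrow> coef w = d"
proof -
  assume h: "repH w H d"
  then have "\<exists>H. repH w H (coef w)" unfolding coef_def by (rule someI_ex[OF exI[of _ d], OF exI[of _ H]])
  then obtain H' where "repH w H' (coef w)" by blast
  then show ?thesis using rep_unique h by blast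
qed

lemma coef_add:
  assumes "w1 \<in> Rspan R Bw" "w2 \<in> Rspan R Bw"
  shows "coef (w1 + w2) v = coef w1 v + coef w2 v"
proof -
  obtain H1 d1 where r1: "repH w1 H1 d1" using rep_exists[OF assms(1)] by blast
  obtain H2 d2 where r2: "repH w2 H2 d2" using rep_exists[OF assms(2)] by blast
  have f: "finite (H1 \<union> H2)" "H1 \<union> H2 \<subseteq> Bw" using r1 r2 unfolding repH_def by auto
  have r1': "repH w1 (H1 \<union> H2) d1" using rep_extend[OF r1 _ f] by simp
  have r2': "repH w2 (H1 \<union> H2) d2" using rep_extend[OF r2 _ f] by simp
  have "repH (w1 + w2) (H1 \<union> H2) (\<lambda>v. d1 v + d2 v)"
    using r1' r2' sub_add[OF Rs] unfolding repH_def by (simp add: scaleR_add_left sum.distrib)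
  then have "coef (w1 + w2) = (\<lambda>v. d1 v + d2 v)" by (rule coef_eq)
  then show ?thesis using coef_eq[OF r1] coef_eq[OF r2] by simp
qed

lemma coef_scale:
  assumes "w \<in> Rspan R Bw" "r \<in> R"
  shows "coef (r *\<^sub>R w) v = r * coef w v"
proof -
  obtain H d where rr: "repH w H d" using rep_exists[OF assms(1)] by blast
  have "repH (r *\<^sub>R w) H (\<lambda>v. r * d v)"
    using rr sub_mult[OF Rs assms(2)] unfolding repH_def by (simp add: scaleR_sum_right)
  then have "coef (r *\<^sub>R w) = (\<lambda>v. r * d v)" by (rule coef_eq)
  then show ?thesis using coef_eq[OF rr] by simp
qed

lemma coef_R: "w \<in> Rspan R Bw \<Longrightarrow> coef w v \<in> R"
proof -
  assume "w \<in> Rspan R Bw"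
  then obtain H d where rr: "repH w H d" using rep_exists by blast
  then show ?thesis using coef_eq[OF rr] unfolding repH_def by simp
qed

lemma coef_basis:
  assumes "b \<in> Bw"
  shows "coef b v = (if v = b then 1 else 0)"
proof -
  have "repH b {b} (\<lambda>v. if v = b then 1 else 0)"
    unfolding repH_def using assms sub_0[OF Rs] sub_1[OF Rs] by simp
  then show ?thesis using coef_eq by simp
qed

lemma coef_sum:
  assumes "finite A" "\<And>i. i \<in> A \<Longrightarrow> f i \<in> Rspan R Bw"
  shows "coef (sum f A) v = (\<Sum>i\<in>A. coef (f i) v)"
  using assms
proof (induction A rule: finite_induct)
  case empty
  have "repH 0 {} (\<lambda>_. 0)" unfolding repH_def using sub_0[OF Rs] by simp
  then show ?case using coef_eq by simp
next
  case (insert a F)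
  have "sum f F \<in> Rspan R Bw" using Rspan_sum[OF Rs insert.hyps(1)] insert.prems by blast
  then have "coef (f a + sum f F) v = coef (f a) v + coef (sum f F) v"
    using coef_add insert.prems by blast
  then show ?case using insert by simp
qed

end



context fanctx begin

lemma vp_mult:
  assumes "\<rho> \<in> fan_rays Sig" "w \<in> N" "w \<in> \<rho>"
  shows "\<exists>k::nat. w = of_nat k *\<^sub>R vp \<rho>"
proof -
  obtain s where s: "s \<in> N" "s \<noteq> 0" "\<rho> = rayof s" using fan_ray_gen[OF assms(1)] by blast
  show ?thesis using prim_gen_props(5)[OF s assms(2,3)] .
qed

lemma crd_zero: "b \<in> B \<Longrightarrow> crd 0 b = 0"
  using crd_scale[of b 0 0] by simp

lemma W_coords: "w \<in> W \<Longrightarrow> b \<in> B \<Longrightarrow> crd w b \<in> R"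
proof -
  assume w: "w \<in> W" and b: "b \<in> B"
  have "W \<subseteq> {x. \<forall>b\<in>B. crd x b \<in> R}"
  proof (rule Rspan_minimal)
    show "0 \<in> {x. \<forall>b\<in>B. crd x b \<in> R}" using crd_zero sub_0[OF Rsub] by simp
    show "x + y \<in> {x. \<forall>b\<in>B. crd x b \<in> R}" if "x \<in> {x. \<forall>b\<in>B. crd x b \<in> R}" "y \<in> {x. \<forall>b\<in>B. crd x b \<in> R}" for x y
      using that crd_add sub_add[OF Rsub] by simp
    show "a *\<^sub>R x \<in> {x. \<forall>b\<in>B. crd x b \<in> R}" if "x \<in> {x. \<forall>b\<in>B. crd x b \<in> R}" "a \<in> R" for x a
      using that crd_scale sub_mult[OF Rsub] by simp
    show "N \<subseteq> {x. \<forall>b\<in>B. crd x b \<in> R}"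
    proof
      fix x assume "x \<in> N"
      then obtain k :: "'a \<Rightarrow> int" where k: "\<forall>b\<in>B. crd x b = of_int (k b)" using N_ex by blast
      then show "x \<in> {x. \<forall>b\<in>B. crd x b \<in> R}" using sub_int[OF Rsub] by simp
    qed
  qed
  then show ?thesis using w b by blast
qed

lemma inv_R:
  assumes r0: "\<rho>0 \<in> fan_rays Sig" and s0: "s0 \<in> W" "\<rho>0 = rayof s0"
    and lam: "vp \<rho>0 = lam *\<^sub>R s0" "lam > 0"
  shows "1 / lam \<in> R"
proof -
  define p0 where "p0 = vp \<rho>0"
  have p0N: "p0 \<in> N" "p0 \<noteq> 0" "p0 \<in> \<rho>0" using vp_props[OF r0] p0_def by auto
  obtain k :: "'a \<Rightarrow> int" where k: "\<forall>b\<in>B. crd p0 b = of_int (k b)" using N_ex[OF p0N(1)] by (rule exE)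
  have lk: "lam * crd s0 b = of_int (k b)" if "b \<in> B" for b
    using k that crd_scale[OF that, of lam s0] lam(1) p0_def by simp
  have "\<exists>b1\<in>B. k b1 \<noteq> 0"
  proof (rule ccontr)
    assume "\<not> ?thesis"
    then have "(\<Sum>b\<in>B. crd p0 b *\<^sub>R b) = 0" using k by simp
    then show False using crd_sum_eq[of p0] p0N(2) by simp
  qed
  then obtain b1 where b1: "b1 \<in> B" "k b1 \<noteq> 0" by blast
  define P where "P = {n::nat. n > 0 \<and> (\<exists>a::'a\<Rightarrow>int. int n = (\<Sum>b\<in>B. a b * k b))}"
  have "nat \<bar>k b1\<bar> \<in> P"
  proof -
    have "(\<Sum>b\<in>B. (if b = b1 then sgn (k b1) else 0) * k b) = (\<Sum>b\<in>B. if b = b1 then sgn (k b1) * k b else 0)"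
      by (rule sum.cong) auto
    also have "\<dots> = sgn (k b1) * k b1" using b1(1) finB by (simp add: sum.delta)
    also have "\<dots> = \<bar>k b1\<bar>" by (simp add: abs_sgn mult.commute)
    also have "\<dots> = int (nat \<bar>k b1\<bar>)" by simp
    finally have "int (nat \<bar>k b1\<bar>) = (\<Sum>b\<in>B. (if b = b1 then sgn (k b1) else 0) * k b)" by simp
    then have "\<exists>a::'a\<Rightarrow>int. int (nat \<bar>k b1\<bar>) = (\<Sum>b\<in>B. a b * k b)"
      by (rule exI[of _ "\<lambda>b. if b = b1 then sgn (k b1) else 0"])
    moreover have "nat \<bar>k b1\<bar> > 0" using b1(2) by simp
    ultimately show ?thesis unfolding P_def by simp
  qed
  define d where "d = (LEAST n. n \<in> P)"
  have dP: "d \<in> P" using LeastI[of "\<lambda>n. n \<in> P"] \<open>nat \<bar>k b1\<bar> \<in> P\<close> d_def by metis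
  have dmin: "\<And>n. n \<in> P \<Longrightarrow> d \<le> n" using Least_le d_def by metis
  have dpos: "d > 0" using dP P_def by simp
  obtain a0 :: "'a \<Rightarrow> int" where a0: "int d = (\<Sum>b\<in>B. a0 b * k b)" using dP P_def by blast
  have ddvd: "int d dvd k b2" if b2: "b2 \<in> B" for b2
  proof -
    define q where "q = k b2 div int d"
    define r where "r = k b2 mod int d"
    have kr: "k b2 = q * int d + r" using q_def r_def by simp
    have r0: "0 \<le> r" "r < int d" using dpos r_def by simp_all
    have rsum: "r = (\<Sum>b\<in>B. ((if b = b2 then 1 else 0) - q * a0 b) * k b)"
    proof -
      have "(\<Sum>b\<in>B. ((if b = b2 then 1 else 0) - q * a0 b) * k b)
          = (\<Sum>b\<in>B. (if b = b2 then k b else 0)) - q * (\<Sum>b\<in>B. a0 b * k b)"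
      proof -
        have "(\<Sum>b\<in>B. ((if b = b2 then 1 else 0) - q * a0 b) * k b)
            = (\<Sum>b\<in>B. (if b = b2 then k b else 0) - q * (a0 b * k b))"
          by (rule sum.cong) (auto simp: algebra_simps)
        also have "\<dots> = (\<Sum>b\<in>B. (if b = b2 then k b else 0)) - q * (\<Sum>b\<in>B. a0 b * k b)"
          by (simp only: sum_subtractf sum_distrib_left)
        finally show ?thesis .
      qed
      also have "\<dots> = k b2 - q * int d" using b2 finB a0 by (simp add: sum.delta)
      finally show ?thesis using kr by simp
    qed
    have "r = 0"
    proof (rule ccontr)
      assume "r \<noteq> 0"
      then have "nat r > 0" "int (nat r) = r" using r0 by auto
      then have e: "int (nat r) = (\<Sum>b\<in>B. ((if b = b2 then 1 else 0) - q * a0 b) * k b)" using rsum by simp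
      have "\<exists>a::'a\<Rightarrow>int. int (nat r) = (\<Sum>b\<in>B. a b * k b)"
        by (rule exI[of _ "\<lambda>b. (if b = b2 then 1 else 0) - q * a0 b"]) (rule e)
      then have "nat r \<in> P" unfolding P_def using \<open>nat r > 0\<close> by simp
      then have "d \<le> nat r" by (rule dmin)
      then show False using r0 by linarith
    qed
    then show ?thesis using kr by simp
  qed
  define p' where "p' = (1 / real d) *\<^sub>R p0"
  have "p' \<in> N"
  proof (rule N_I[of p' "\<lambda>b. k b div int d"])
    fix b assume b: "b \<in> B"
    have "crd p' b = of_int (k b) / real d" unfolding p'_def using crd_scale[OF b] k b by simp
    also have "\<dots> = of_int (k b div int d)" using ddvd[OF b] dpos by (simp add: real_of_int_div)
    finally show "crd p' b = of_int (k b div int d)" .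
  qed
  moreover have "p' \<in> \<rho>0"
  proof -
    have "p' = (lam / real d) *\<^sub>R s0" unfolding p'_def p0_def lam(1) by simp
    then show ?thesis using s0(2) rayof_mem[of "lam / real d" s0] lam(2) by simp
  qed
  ultimately obtain n :: nat where n: "p' = of_nat n *\<^sub>R p0" using vp_mult[OF r0] p0_def by blast
  have "(1 / real d - real n) *\<^sub>R p0 = 0" using n unfolding p'_def by (simp add: scaleR_diff_left)
  then have "1 / real d = real n" using p0N(2) by simp
  then have "real n * real d = 1" using dpos by (simp add: field_simps)
  then have "n * d = 1" by (metis of_nat_1 of_nat_eq_iff of_nat_mult)
  then have d1: "d = 1" by simp
  have "real_of_int (int d) = real_of_int (\<Sum>b\<in>B. a0 b * k b)" using a0 by simp
  then have "1 = (\<Sum>b\<in>B. real_of_int (a0 b) * real_of_int (k b))" using d1 by simp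
  also have "\<dots> = (\<Sum>b\<in>B. real_of_int (a0 b) * (lam * crd s0 b))" using lk by simp
  also have "\<dots> = lam * (\<Sum>b\<in>B. real_of_int (a0 b) * crd s0 b)" by (simp add: sum_distrib_left algebra_simps)
  finally have "1 / lam = (\<Sum>b\<in>B. real_of_int (a0 b) * crd s0 b)" using lam(2) by (simp add: field_simps)
  moreover have "(\<Sum>b\<in>B. real_of_int (a0 b) * crd s0 b) \<in> R"
    by (rule sub_sum[OF Rsub]) (use sub_mult[OF Rsub] sub_int[OF Rsub] W_coords[OF s0(1)] in simp)
  ultimately show ?thesis by simp
qed

end



context fanctx begin

lemma iv_D:
  assumes iv: "W_regular R W sig"
  shows "Dc"
proof -
  obtain S Bw where SB: "S \<subseteq> Bw" "R_basis R W Bw" "sig = conic_hull S"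
    using iv unfolding W_regular_def by blast
  have BwW: "Bw \<subseteq> W" "R_independent R Bw" "Rspan R Bw = W" using SB(2) unfolding R_basis_def by auto
  interpret rb: rbasis R Bw using Rsub BwW(2) by unfold_locales
  show "Dc" unfolding Dc_def
  proof
    fix \<rho>0 assume r0: "\<rho>0 \<in> cone_rays sig"
    have r0f: "\<rho>0 \<in> fan_rays Sig" using sig_rays[OF r0] .
    have "cone_face \<rho>0 (conic_hull S)" "is_ray \<rho>0" using r0 SB(3) unfolding cone_rays_def by auto
    then obtain s0 where s0: "s0 \<in> S" "s0 \<noteq> 0" "\<rho>0 = rayof s0" using ray_face_gen by blast
    have s0W: "s0 \<in> W" "s0 \<in> Bw" using s0(1) SB(1) BwW(1) by auto
    define m where "m x = (\<Sum>b\<in>B. crd x b * rb.coef b s0)" for x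
    have lm: "linear m"
    proof (rule linearI)
      fix x y show "m (x + y) = m x + m y"
        unfolding m_def by (simp add: crd_add distrib_right sum.distrib)
    next
      fix c :: real and x show "m (c *\<^sub>R x) = c *\<^sub>R m x"
        unfolding m_def by (simp add: crd_scale sum_distrib_left mult.assoc)
    qed
    have mw: "m w = rb.coef w s0" if w: "w \<in> W" for w
    proof -
      have inW: "crd w b *\<^sub>R b \<in> Rspan R Bw" if b: "b \<in> B" for b
      proof -
        have "b \<in> W" using b B_sub_N N_sub_W by blast
        then show ?thesis using Rspan_scale[OF Rsub _ W_coords[OF w b]] BwW(3) by simp
      qed
      have "rb.coef w s0 = rb.coef (\<Sum>b\<in>B. crd w b *\<^sub>R b) s0" using crd_sum_eq[of w] by simp
      also have "\<dots> = (\<Sum>b\<in>B. rb.coef (crd w b *\<^sub>R b) s0)" using rb.coef_sum[OF finB inW] .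
      also have "\<dots> = (\<Sum>b\<in>B. crd w b * rb.coef b s0)"
      proof (rule sum.cong[OF refl])
        fix b assume b: "b \<in> B"
        have "b \<in> Rspan R Bw" using b B_sub_N N_sub_W BwW(3) by blast
        then show "rb.coef (crd w b *\<^sub>R b) s0 = crd w b * rb.coef b s0"
          using rb.coef_scale W_coords[OF w b] by blast
      qed
      finally show ?thesis unfolding m_def by simp
    qed
    have mD: "m \<in> dual_W R W"
    proof (rule dual_WI[OF lm])
      fix w assume "w \<in> W" then show "m w \<in> R" using mw rb.coef_R BwW(3) by simp
    qed
    have mB: "m s = (if s0 = s then 1 else 0)" if "s \<in> Bw" for s
      using mw[of s] that BwW(1) rb.coef_basis[OF that, of s0] by auto
    define p0 where "p0 = vp \<rho>0"
    have "p0 \<in> rayof s0" using vp_props(2)[OF r0f] s0(3) p0_def by simp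
    then obtain lam where lam: "lam \<ge> 0" "p0 = lam *\<^sub>R s0" by (rule rayof_memE)
    have lp: "lam > 0" using lam vp_props(3)[OF r0f] p0_def by (cases "lam = 0") auto
    have mp0: "m p0 = lam" using lam(2) linear_scale[OF lm] mB[OF s0W(2)] by simp
    have invR: "1 / lam \<in> R" using inv_R[OF r0f s0W(1) s0(3) _ lp] lam(2) p0_def by simp
    have other: "m (vp \<rho>) = 0" if r: "\<rho> \<in> cone_rays sig" "\<rho> \<noteq> \<rho>0" for \<rho>
    proof -
      obtain w :: "'a \<Rightarrow> real" where w: "linear w" "\<forall>x\<in>sig. w x \<ge> 0" "\<rho> = {x\<in>sig. w x = 0}"
        using r(1) unfolding cone_rays_def cone_face_def by blast
      have "\<forall>x\<in>conic_hull S. w x \<ge> 0" using w(2) SB(3) by simp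
      then have fe: "{x\<in>conic_hull S. w x = 0} = conic_hull {s\<in>S. w s = 0}" by (rule face_ch[OF w(1)])
      have vr: "vp \<rho> \<in> conic_hull {s\<in>S. w s = 0}"
        using vp_props(2)[OF sig_rays[OF r(1)]] w(3) fe SB(3) by simp
      have z: "m s = 0" if s: "s \<in> {s\<in>S. w s = 0}" for s
      proof -
        have "s \<noteq> s0"
        proof
          assume "s = s0"
          then have "s0 \<in> \<rho>" using s w(3) SB(3) ch_base[of s0 S] by simp
          moreover have "is_ray \<rho>" using r(1) unfolding cone_rays_def by blast
          ultimately obtain q where "q \<noteq> 0" "\<rho> = rayof q" "s0 \<in> rayof q" by (metis is_rayE)
          then have "\<rho> = rayof s0" using rayof_nonzero_mem s0(2) by metis
          then show False using s0(3) r(2) by simp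
        qed
        then show ?thesis using mB s SB(1) by auto
      qed
      show ?thesis using ch_linear_zero[of m "{s\<in>S. w s = 0}" "vp \<rho>"] lm z vr by blast
    qed
    define mm where "mm x = (1 / lam) * m x" for x
    have "mm \<in> dual_W R W" unfolding mm_def using dual_cmul[OF Rsub invR mD] .
    moreover have "\<forall>\<rho>\<in>cone_rays sig. mm (vp \<rho>) = (if \<rho> = \<rho>0 then 1 else 0)"
    proof
      fix \<rho> assume r: "\<rho> \<in> cone_rays sig"
      show "mm (vp \<rho>) = (if \<rho> = \<rho>0 then 1 else 0)"
      proof (cases "\<rho> = \<rho>0")
        case True then show ?thesis using mp0 lp p0_def unfolding mm_def by simp
      next
        case False then show ?thesis using other[OF r False] unfolding mm_def by simp
      qed
    qed
    ultimately show "\<exists>m\<in>dual_W R W. \<forall>\<rho>\<in>cone_rays sig. m (vp \<rho>) = (if \<rho> = \<rho>0 then 1 else 0)"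
      by blast
  qed
qed

end



definition submod :: "real set \<Rightarrow> 'a::real_vector set \<Rightarrow> bool" where
  "submod R M \<longleftrightarrow> 0 \<in> M \<and> (\<forall>x\<in>M. \<forall>y\<in>M. x + y \<in> M) \<and> (\<forall>x\<in>M. \<forall>r\<in>R. r *\<^sub>R x \<in> M)"

lemma Rspan_empty: "Rspan R {} = {0}"
  unfolding Rspan_def by auto

lemma Rspan_sub_submod: "submod R M \<Longrightarrow> C \<subseteq> M \<Longrightarrow> Rspan R C \<subseteq> M"
  unfolding submod_def by (intro Rspan_minimal) auto

context fanctx begin

lemma Rspan_B_sub_W: "X \<subseteq> B \<Longrightarrow> Rspan R X \<subseteq> W"
  using Rspan_mono[of X N R] B_sub_N by blast

lemma crd_outside:
  assumes "X \<subseteq> B" "x \<in> Rspan R X" "b \<in> B - X"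
  shows "crd x b = 0"
proof -
  have "Rspan R X \<subseteq> {x. \<forall>b\<in>B - X. crd x b = 0}"
  proof (rule Rspan_minimal)
    show "0 \<in> {x. \<forall>b\<in>B - X. crd x b = 0}" using crd_zero by simp
    show "x + y \<in> {x. \<forall>b\<in>B - X. crd x b = 0}" if "x \<in> {x. \<forall>b\<in>B - X. crd x b = 0}" "y \<in> {x. \<forall>b\<in>B - X. crd x b = 0}" for x y
      using that crd_add by simp
    show "a *\<^sub>R x \<in> {x. \<forall>b\<in>B - X. crd x b = 0}" if "x \<in> {x. \<forall>b\<in>B - X. crd x b = 0}" "a \<in> R" for x a
      using that crd_scale by simp
    show "X \<subseteq> {x. \<forall>b\<in>B - X. crd x b = 0}"
    proof
      fix v assume v: "v \<in> X"
      have "\<forall>b\<in>B - X. crd v b = 0"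
      proof
        fix b assume b: "b \<in> B - X"
        have "v \<in> B" using v assms(1) by blast
        then have "representation B v = (\<lambda>u. if u = v then 1 else 0)" by (rule representation_basis[OF indB])
        then show "crd v b = 0" unfolding crd_def using b v by auto
      qed
      then show "v \<in> {x. \<forall>b\<in>B - X. crd x b = 0}" by simp
    qed
  qed
  then show ?thesis using assms(2,3) by blast
qed

lemma in_Rspan_sub:
  assumes "X \<subseteq> B" "x \<in> Rspan R (insert b X)" "b \<in> B" "crd x b = 0"
  shows "x \<in> Rspan R X"
proof -
  have iB: "insert b X \<subseteq> B" using assms by blast
  have xW: "x \<in> W" using Rspan_B_sub_W[OF iB] assms(2) by blast
  have "x = (\<Sum>b'\<in>B. crd x b' *\<^sub>R b')" using crd_sum_eq by simp
  also have "\<dots> = (\<Sum>b'\<in>X. crd x b' *\<^sub>R b')"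
  proof (rule sum.mono_neutral_right[OF finB assms(1)])
    show "\<forall>i\<in>B - X. crd x i *\<^sub>R i = 0"
    proof
      fix i assume i: "i \<in> B - X"
      show "crd x i *\<^sub>R i = 0"
      proof (cases "i = b")
        case True then show ?thesis using assms(4) by simp
      next
        case False then have "i \<in> B - insert b X" using i by blast
        then show ?thesis using crd_outside[OF iB assms(2)] by simp
      qed
    qed
  qed
  finally have "x = (\<Sum>b'\<in>X. crd x b' *\<^sub>R b')" .
  moreover have "finite X" using finite_subset[OF assms(1) finB] .
  moreover have "\<forall>b'\<in>X. crd x b' \<in> R" using W_coords[OF xW] assms(1) by blast
  ultimately show ?thesis by (intro RspanI[of X X "crd x"]) auto
qed

lemma free_submod:
  assumes "A \<subseteq> B" "submod R M" "M \<subseteq> Rspan R A"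
  shows "\<exists>C. R_basis R M C"
proof -
  have fA: "finite A" using finite_subset[OF assms(1) finB] .
  show ?thesis using fA assms
  proof (induction A arbitrary: M rule: finite_induct)
    case empty
    have "Rspan R ({}::'a set) \<subseteq> {0}" unfolding Rspan_def by auto
    then have "M \<subseteq> {0}" using empty.prems(3) by blast
    moreover have "0 \<in> M" using empty.prems(2) unfolding submod_def by simp
    ultimately have M0: "M = {0}" by blast
    have ind: "R_independent R {}" unfolding R_independent_def by simp
    have "Rspan R ({}::'a set) = {0}" unfolding Rspan_def by auto
    then have "R_basis R M {}" unfolding R_basis_def using M0 ind by simp
    then show ?case by blast
  next
    case (insert b A)
    have bB: "b \<in> B" using insert.prems(1) by simp
    have AB: "A \<subseteq> B" using insert.prems(1) by simp
    have sM: "submod R M" using insert.prems(2) .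
    have MW: "M \<subseteq> W" using insert.prems(3) Rspan_B_sub_W[OF insert.prems(1)] by (rule subset_trans)
    define \<pi> where "\<pi> x = crd x b" for x
    have piR: "\<pi> x \<in> R" if hx: "x \<in> M" for x
    proof -
      have "x \<in> W" using MW hx by blast
      then show ?thesis unfolding \<pi>_def by (rule W_coords[OF _ bB])
    qed
    define I where "I = \<pi> ` M"
    have "ring_ideal R I" unfolding ring_ideal_def
    proof (intro conjI ballI)
      show "I \<subseteq> R" using piR I_def by blast
      show "0 \<in> I" using sM crd_zero[OF bB] unfolding submod_def I_def \<pi>_def by force
      fix x y assume "x \<in> I" "y \<in> I"
      then obtain a c where ac: "a \<in> M" "x = \<pi> a" "c \<in> M" "y = \<pi> c" unfolding I_def by blast
      have "a + c \<in> M" using sM ac unfolding submod_def by blast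
      moreover have "x + y = \<pi> (a + c)" using ac crd_add[OF bB] \<pi>_def by simp
      ultimately show "x + y \<in> I" unfolding I_def by (rule rev_image_eqI)
      have "(-1) *\<^sub>R a \<in> M" using sM ac sub_uminus[OF Rsub sub_1[OF Rsub]] unfolding submod_def by blast
      moreover have "- x = \<pi> ((-1) *\<^sub>R a)"
      proof -
        have "crd ((-1) *\<^sub>R a) b = (-1) * crd a b" by (rule crd_scale[OF bB])
        then show ?thesis using ac unfolding \<pi>_def by simp
      qed
      ultimately show "- x \<in> I" unfolding I_def by (rule rev_image_eqI)
    next
      fix r x assume rx: "r \<in> R" "x \<in> I"
      then obtain a where a: "a \<in> M" "x = \<pi> a" unfolding I_def by blast
      have "r *\<^sub>R a \<in> M" using sM a rx unfolding submod_def by blast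
      moreover have "r * x = \<pi> (r *\<^sub>R a)" using a crd_scale[OF bB] \<pi>_def by simp
      ultimately show "r * x \<in> I" unfolding I_def by (rule rev_image_eqI)
    qed
    then obtain a where a: "a \<in> R" "I = {r * a | r. r \<in> R}"
      using PIR unfolding principal_ideal_subring_def by blast
    define M' where "M' = {x\<in>M. \<pi> x = 0}"
    have sM': "submod R M'" unfolding submod_def M'_def
    proof (intro conjI ballI)
      show "0 \<in> {x\<in>M. \<pi> x = 0}" using sM crd_zero[OF bB] unfolding submod_def \<pi>_def by simp
      fix x y assume "x \<in> {x\<in>M. \<pi> x = 0}" "y \<in> {x\<in>M. \<pi> x = 0}"
      then show "x + y \<in> {x\<in>M. \<pi> x = 0}" using sM crd_add[OF bB] unfolding submod_def \<pi>_def by simp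
    next
      fix x r assume "x \<in> {x\<in>M. \<pi> x = 0}" "r \<in> R"
      then show "r *\<^sub>R x \<in> {x\<in>M. \<pi> x = 0}" using sM crd_scale[OF bB] unfolding submod_def \<pi>_def by simp
    qed
    have M'A: "M' \<subseteq> Rspan R A"
    proof
      fix x assume "x \<in> M'"
      then have "x \<in> Rspan R (insert b A)" "crd x b = 0" using insert.prems(3) M'_def \<pi>_def by auto
      then show "x \<in> Rspan R A" using in_Rspan_sub[OF AB _ bB] by blast
    qed
    obtain C' where C': "R_basis R M' C'" using insert.IH[OF AB sM' M'A] by blast
    have C'M': "C' \<subseteq> M'" "R_independent R C'" "Rspan R C' = M'" using C' unfolding R_basis_def by auto
    show ?case
    proof (cases "a = 0")
      case True
      then have "I \<subseteq> {0}" using a(2) by auto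
      then have "M' = M" unfolding M'_def I_def by auto
      then show ?thesis using C' by blast
    next
      case False
      have "a \<in> I" unfolding a(2) by (rule CollectI, rule exI[of _ 1]) (simp add: sub_1[OF Rsub])
      then obtain m0 where m0: "m0 \<in> M" "\<pi> m0 = a" unfolding I_def by blast
      have m0C': "m0 \<notin> C'" using C'M'(1) m0 False unfolding M'_def by auto
      define C where "C = insert m0 C'"
      have CM: "C \<subseteq> M" using C'M'(1) m0(1) unfolding C_def M'_def by blast
      have pi_sum: "\<pi> (\<Sum>v\<in>F. c v *\<^sub>R v) = (\<Sum>v\<in>F. c v * \<pi> v)" if "finite F" for F c
        using that
      proof (induction F rule: finite_induct)
        case empty then show ?case using crd_zero[OF bB] \<pi>_def by simp
      next
        case (insert x F) then show ?case using crd_add[OF bB] crd_scale[OF bB] \<pi>_def by simp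
      qed
      have indC: "R_independent R C"
        unfolding R_independent_def
      proof (intro allI impI)
        fix F c assume h: "finite F \<and> F \<subseteq> C \<and> (\<forall>v\<in>F. c v \<in> R) \<and> (\<Sum>v\<in>F. c v *\<^sub>R v) = 0"
        have pz: "\<pi> v = 0" if "v \<in> C'" for v using that C'M'(1) M'_def by blast
        have cm0: "m0 \<in> F \<longrightarrow> c m0 = 0"
        proof
          assume m0F: "m0 \<in> F"
          have "0 = (\<Sum>v\<in>F. c v * \<pi> v)" using pi_sum[of F c] h crd_zero[OF bB] \<pi>_def by simp
          also have "\<dots> = c m0 * \<pi> m0 + (\<Sum>v\<in>F - {m0}. c v * \<pi> v)"
            using h m0F by (simp add: sum.remove)
          also have "(\<Sum>v\<in>F - {m0}. c v * \<pi> v) = 0"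
            using h pz unfolding C_def by (intro sum.neutral) auto
          finally have "c m0 * a = 0" using m0(2) by simp
          then show "c m0 = 0" using False by simp
        qed
        have F'C': "F - {m0} \<subseteq> C'" using h unfolding C_def by blast
        have "(\<Sum>v\<in>F - {m0}. c v *\<^sub>R v) = 0"
        proof (cases "m0 \<in> F")
          case True
          have fF: "finite F" using h by simp
          have "(\<Sum>v\<in>F. c v *\<^sub>R v) = c m0 *\<^sub>R m0 + (\<Sum>v\<in>F - {m0}. c v *\<^sub>R v)"
            by (rule sum.remove[OF fF True])
          then show ?thesis using h cm0 True by simp
        next
          case False then show ?thesis using h by simp
        qed
        then have "\<forall>v\<in>F - {m0}. c v = 0"
          using C'M'(2)[unfolded R_independent_def, rule_format, of "F - {m0}" c] h F'C' by blast
        then show "\<forall>v\<in>F. c v = 0" using cm0 by blast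
      qed
      have spC: "Rspan R C = M"
      proof
        show "Rspan R C \<subseteq> M" using Rspan_sub_submod[OF sM CM] .
        show "M \<subseteq> Rspan R C"
        proof
          fix x assume x: "x \<in> M"
          then have "\<pi> x \<in> I" unfolding I_def by blast
          then obtain r where r: "r \<in> R" "\<pi> x = r * a" using a(2) by blast
          have rm: "r *\<^sub>R m0 \<in> M" using sM m0(1) r(1) unfolding submod_def by blast
          have "(-1) *\<^sub>R (r *\<^sub>R m0) \<in> M" using sM rm sub_uminus[OF Rsub sub_1[OF Rsub]] unfolding submod_def by blast
          then have "x + (-1) *\<^sub>R (r *\<^sub>R m0) \<in> M" using sM x unfolding submod_def by blast
          moreover have "\<pi> (x + (-1) *\<^sub>R (r *\<^sub>R m0)) = 0"
            using r m0(2) crd_diff[OF bB] crd_scale[OF bB] \<pi>_def by simp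
          ultimately have "x + (-1) *\<^sub>R (r *\<^sub>R m0) \<in> M'" unfolding M'_def by blast
          then have "x - r *\<^sub>R m0 \<in> Rspan R C" using C'M'(3) Rspan_mono[of C' C R] C_def by auto
          moreover have "r *\<^sub>R m0 \<in> Rspan R C" using Rspan_scale[OF Rsub Rspan_base[OF Rsub] r(1), of m0 C] C_def by simp
          ultimately have "(x - r *\<^sub>R m0) + r *\<^sub>R m0 \<in> Rspan R C" by (rule Rspan_add[OF Rsub])
          then show "x \<in> Rspan R C" by simp
        qed
      qed
      have "R_basis R M C" unfolding R_basis_def using CM indC spC by blast
      then show ?thesis by blast
    qed
  qed
qed

end



context fanctx begin

lemma W_submod: "submod R W"
  unfolding submod_def using Rspan_0[OF Rsub] Rspan_add[OF Rsub] Rspan_scale[OF Rsub] by blast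

lemma W_sub_RspanB: "W \<subseteq> Rspan R B"
proof (rule Rspan_minimal)
  show "0 \<in> Rspan R B" by (rule Rspan_0[OF Rsub])
  show "x + y \<in> Rspan R B" if "x \<in> Rspan R B" "y \<in> Rspan R B" for x y using Rspan_add[OF Rsub that] .
  show "a *\<^sub>R x \<in> Rspan R B" if "x \<in> Rspan R B" "a \<in> R" for x a using Rspan_scale[OF Rsub that] .
  show "N \<subseteq> Rspan R B"
  proof
    fix x assume x: "x \<in> N"
    have xW: "x \<in> W" using x N_sub_W by blast
    have "x = (\<Sum>b\<in>B. crd x b *\<^sub>R b)" using crd_sum_eq by simp
    moreover have "\<forall>b\<in>B. crd x b \<in> R" using W_coords[OF xW] by blast
    ultimately show "x \<in> Rspan R B" by (intro RspanI[of B B "crd x"]) (auto simp: finB)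
  qed
qed

lemma D_iv:
  assumes D: "Dc"
  shows "W_regular R W sig"
proof -
  obtain mf where mf: "\<And>\<rho>0. \<rho>0 \<in> cone_rays sig \<Longrightarrow> mf \<rho>0 \<in> dual_W R W"
    "\<And>\<rho>0 \<rho>. \<rho>0 \<in> cone_rays sig \<Longrightarrow> \<rho> \<in> cone_rays sig \<Longrightarrow> mf \<rho>0 (vp \<rho>) = (if \<rho> = \<rho>0 then 1 else 0)"
    using D_fun[OF D] by blast
  define CR where "CR = cone_rays sig"
  have fCR: "finite CR" using cone_rays_finite[OF sigin] CR_def by simp
  have lin: "linear (mf \<rho>)" if "\<rho> \<in> CR" for \<rho> using mf(1) that CR_def dual_W_lin by blast
  have vpinj: "\<rho>1 = \<rho>2" if "\<rho>1 \<in> CR" "\<rho>2 \<in> CR" "vp \<rho>1 = vp \<rho>2" for \<rho>1 \<rho>2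
    using vp_props(4)[OF sig_rays] that CR_def by metis
  define K where "K = {w\<in>W. \<forall>\<rho>\<in>CR. mf \<rho> w = 0}"
  have sK: "submod R K" unfolding submod_def K_def
  proof (intro conjI ballI)
    have "0 \<in> W" by (rule Rspan_0[OF Rsub])
    moreover have "\<forall>\<rho>\<in>CR. mf \<rho> 0 = 0" using linear_0[OF lin] by blast
    ultimately show "0 \<in> {w\<in>W. \<forall>\<rho>\<in>CR. mf \<rho> w = 0}" by simp
  next
    fix x y assume "x \<in> {w\<in>W. \<forall>\<rho>\<in>CR. mf \<rho> w = 0}" "y \<in> {w\<in>W. \<forall>\<rho>\<in>CR. mf \<rho> w = 0}"
    then have "x + y \<in> W" "\<forall>\<rho>\<in>CR. mf \<rho> (x + y) = 0"
      using Rspan_add[OF Rsub, of x N y] linear_add[OF lin] by auto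
    then show "x + y \<in> {w\<in>W. \<forall>\<rho>\<in>CR. mf \<rho> w = 0}" by simp
  next
    fix x r assume "x \<in> {w\<in>W. \<forall>\<rho>\<in>CR. mf \<rho> w = 0}" "r \<in> R"
    then have "r *\<^sub>R x \<in> W" "\<forall>\<rho>\<in>CR. mf \<rho> (r *\<^sub>R x) = 0"
      using Rspan_scale[OF Rsub, of x N r] linear_scale[OF lin] by auto
    then show "r *\<^sub>R x \<in> {w\<in>W. \<forall>\<rho>\<in>CR. mf \<rho> w = 0}" by simp
  qed
  have KB: "K \<subseteq> Rspan R B" using W_sub_RspanB K_def by blast
  obtain C where C: "R_basis R K C" using free_submod[OF _ sK KB] by blast
  have CK: "C \<subseteq> K" "R_independent R C" "Rspan R C = K" using C unfolding R_basis_def by auto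
  define Bw where "Bw = G \<union> C"
  have GW: "G \<subseteq> W" unfolding G_def using vp_W sig_rays by blast
  have mG: "mf \<rho>1 g = (if g = vp \<rho>1 then 1 else 0)" if r1: "\<rho>1 \<in> CR" and g: "g \<in> Bw" for \<rho>1 g
  proof (cases "g \<in> G")
    case True
    then obtain \<rho> where r: "\<rho> \<in> CR" "g = vp \<rho>" unfolding G_def CR_def by blast
    have "mf \<rho>1 g = (if \<rho> = \<rho>1 then 1 else 0)" using mf(2) r r1 CR_def by simp
    moreover have "\<rho> = \<rho>1 \<longleftrightarrow> g = vp \<rho>1" using vpinj r r1 by blast
    ultimately show ?thesis by simp
  next
    case False
    then have "g \<in> K" using g CK(1) Bw_def by blast
    then have "mf \<rho>1 g = 0" using r1 K_def by blast
    moreover have "g \<noteq> vp \<rho>1" using False r1 unfolding G_def CR_def by blast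
    ultimately show ?thesis by simp
  qed
  have GC: "G \<inter> C = {}"
  proof -
    have "g \<notin> K" if hg: "g \<in> G" for g
    proof -
      obtain \<rho> where r: "\<rho> \<in> CR" "g = vp \<rho>" using hg unfolding G_def CR_def by blast
      then have "mf \<rho> g = 1" using mf(2) CR_def by simp
      then show ?thesis using r(1) K_def by force
    qed
    then show ?thesis using CK(1) by blast
  qed
  have BwW: "Bw \<subseteq> W" using GW CK(1) K_def Bw_def by blast
  have indBw: "R_independent R Bw"
    unfolding R_independent_def
  proof (intro allI impI)
    fix F c assume h: "finite F \<and> F \<subseteq> Bw \<and> (\<forall>v\<in>F. c v \<in> R) \<and> (\<Sum>v\<in>F. c v *\<^sub>R v) = 0"
    have fF: "finite F" and FB: "F \<subseteq> Bw" using h by auto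
    have cG: "c g = 0" if hg: "g \<in> F" "g \<in> G" for g
    proof -
      obtain \<rho>1 where r1: "\<rho>1 \<in> CR" "g = vp \<rho>1" using hg(2) unfolding G_def CR_def by blast
      have "0 = mf \<rho>1 (\<Sum>v\<in>F. c v *\<^sub>R v)" using h lin[OF r1(1)] linear_0 by simp
      also have "\<dots> = (\<Sum>v\<in>F. c v * mf \<rho>1 v)" by (rule ch_linear_sum[OF lin[OF r1(1)] refl])
      also have "\<dots> = (\<Sum>v\<in>F. if v = g then c v else 0)"
      proof (rule sum.cong[OF refl])
        fix v assume "v \<in> F" then have "v \<in> Bw" using FB by blast
        then show "c v * mf \<rho>1 v = (if v = g then c v else 0)" using mG[OF r1(1)] r1(2) by simp
      qed
      also have "\<dots> = c g" using fF hg(1) by (simp add: sum.delta')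
      finally show ?thesis by simp
    qed
    have "(\<Sum>v\<in>F - G. c v *\<^sub>R v) = (\<Sum>v\<in>F. c v *\<^sub>R v)"
      by (rule sum.mono_neutral_left[OF fF]) (use cG in auto)
    then have z: "(\<Sum>v\<in>F - G. c v *\<^sub>R v) = 0" using h by simp
    have "F - G \<subseteq> C" using FB Bw_def by blast
    then have "\<forall>v\<in>F - G. c v = 0"
      using CK(2)[unfolded R_independent_def, rule_format, of "F - G" c] fF h z by blast
    then show "\<forall>v\<in>F. c v = 0" using cG by blast
  qed
  have spBw: "Rspan R Bw = W"
  proof
    show "Rspan R Bw \<subseteq> W" by (rule Rspan_sub_submod[OF W_submod BwW])
    show "W \<subseteq> Rspan R Bw"
    proof
      fix w assume w: "w \<in> W"
      define s where "s = (\<Sum>\<rho>\<in>CR. mf \<rho> w *\<^sub>R vp \<rho>)"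
      have sB: "s \<in> Rspan R Bw" unfolding s_def
      proof (rule Rspan_sum[OF Rsub fCR])
        fix \<rho> assume r: "\<rho> \<in> CR"
        have "vp \<rho> \<in> Bw" using r Bw_def G_def CR_def by blast
        then have "vp \<rho> \<in> Rspan R Bw" by (rule Rspan_base[OF Rsub])
        moreover have "mf \<rho> w \<in> R" using dual_W_val mf(1) r w CR_def by blast
        ultimately show "mf \<rho> w *\<^sub>R vp \<rho> \<in> Rspan R Bw" by (rule Rspan_scale[OF Rsub])
      qed
      have sW: "s \<in> W" using sB Rspan_sub_submod[OF W_submod BwW] by blast
      have "w - s \<in> K"
      proof -
        have "w - s \<in> W" using Rspan_diff[OF Rsub w sW] .
        moreover have "mf \<rho>1 (w - s) = 0" if r1: "\<rho>1 \<in> CR" for \<rho>1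
        proof -
          have "mf \<rho>1 s = (\<Sum>\<rho>\<in>CR. mf \<rho> w * mf \<rho>1 (vp \<rho>))"
            unfolding s_def by (simp add: linear_sum[OF lin[OF r1]] linear_scale[OF lin[OF r1]])
          also have "\<dots> = (\<Sum>\<rho>\<in>CR. if \<rho> = \<rho>1 then mf \<rho> w else 0)"
          proof (rule sum.cong[OF refl])
            fix \<rho> assume "\<rho> \<in> CR"
            then show "mf \<rho> w * mf \<rho>1 (vp \<rho>) = (if \<rho> = \<rho>1 then mf \<rho> w else 0)"
              using mf(2) r1 CR_def by auto
          qed
          also have "\<dots> = mf \<rho>1 w" using fCR r1 by (simp add: sum.delta')
          finally show ?thesis using linear_diff[OF lin[OF r1]] by simp
        qed
        ultimately show ?thesis unfolding K_def by blast
      qed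
      then have "w - s \<in> Rspan R Bw" using CK(3) Rspan_mono[of C Bw R] Bw_def by blast
      then have "(w - s) + s \<in> Rspan R Bw" using sB by (rule Rspan_add[OF Rsub])
      then show "w \<in> Rspan R Bw" by simp
    qed
  qed
  have "R_basis R W Bw" unfolding R_basis_def using BwW indBw spBw by blast
  moreover have "G \<subseteq> Bw" using Bw_def by blast
  ultimately show ?thesis unfolding W_regular_def using sig_G by blast
qed

end



theorem proposition1p260:
  fixes R :: "real set" and N :: "'v::euclidean_space set"
    and \<Sigma> :: "'v set set" and \<sigma> :: "'v set"
  assumes "principal_ideal_subring R"
    and "is_lattice N"
    and "N_fan N \<Sigma>"
    and "\<sigma> \<in> \<Sigma>"
  defines "W \<equiv> Rspan R N"
  shows "(A_W_sigma R N \<Sigma> \<sigma> = A_W R N \<Sigma>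
          \<longleftrightarrow> (\<forall>\<tau>. cone_face \<tau> \<sigma> \<and> \<tau> \<noteq> \<sigma> \<longrightarrow>
                (\<exists>u \<in> perp \<tau> \<inter> dual_W R W.
                   \<forall>\<rho> \<in> cone_rays \<sigma> - cone_rays \<tau>. u (prim_gen N \<rho>) = 1)))
       \<and> ((\<forall>\<tau>. cone_face \<tau> \<sigma> \<and> \<tau> \<noteq> \<sigma> \<longrightarrow>
                (\<exists>u \<in> perp \<tau> \<inter> dual_W R W.
                   \<forall>\<rho> \<in> cone_rays \<sigma> - cone_rays \<tau>. u (prim_gen N \<rho>) = 1))
          \<longleftrightarrow> (\<forall>\<tau>\<in>\<Sigma>. \<exists>u \<in> perp (\<sigma> \<inter> \<tau>) \<inter> dual_W R W.
                   \<forall>\<rho> \<in> cone_rays \<sigma> - cone_rays \<tau>. u (prim_gen N \<rho>) = 1))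
       \<and> ((\<forall>\<tau>\<in>\<Sigma>. \<exists>u \<in> perp (\<sigma> \<inter> \<tau>) \<inter> dual_W R W.
                   \<forall>\<rho> \<in> cone_rays \<sigma> - cone_rays \<tau>. u (prim_gen N \<rho>) = 1)
          \<longleftrightarrow> W_regular R W \<sigma>)"
proof -
  obtain B where B: "finite B" "independent B" "span B = UNIV"
    "N = {x. \<exists>k::'v \<Rightarrow> int. x = (\<Sum>b\<in>B. of_int (k b) *\<^sub>R b)}"
    using lattice_basis[OF assms(2)] by blast
  interpret fc: fanctx B N R \<Sigma> \<sigma>
    using B assms(1,3,4) by unfold_locales auto
  have i: "A_W_sigma R N \<Sigma> \<sigma> = A_W R N \<Sigma> \<longleftrightarrow> fc.Dc" by (rule fc.i_iff_D)
  have ii: "(\<forall>\<tau>. cone_face \<tau> \<sigma> \<and> \<tau> \<noteq> \<sigma> \<longrightarrow>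
                (\<exists>u \<in> perp \<tau> \<inter> dual_W R W.
                   \<forall>\<rho> \<in> cone_rays \<sigma> - cone_rays \<tau>. u (prim_gen N \<rho>) = 1)) \<longleftrightarrow> fc.Dc"
    unfolding W_def using fc.ii_D fc.iii_ii fc.D_iii by blast
  have iii: "(\<forall>\<tau>\<in>\<Sigma>. \<exists>u \<in> perp (\<sigma> \<inter> \<tau>) \<inter> dual_W R W.
                   \<forall>\<rho> \<in> cone_rays \<sigma> - cone_rays \<tau>. u (prim_gen N \<rho>) = 1) \<longleftrightarrow> fc.Dc"
    unfolding W_def using fc.ii_D fc.iii_ii fc.D_iii by blast
  have iv: "W_regular R W \<sigma> \<longleftrightarrow> fc.Dc" unfolding W_def using fc.iv_D fc.D_iv by blast
  show ?thesis using i ii iii iv by blast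
qed


end
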